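(* Let $(\Gamma,M)$ be an E-GCM graph whose Coxeter group $W=W(\Gamma,M)$ is finite, with longest element $w_0$. Let $J\subseteq I_n$ and let $(w_0)_J$ be the longest element of $W_J$. Then for any $\lambda\in C_J$, every game sequence for $\lambda$ has length $\ell(w_0)-\ell((w_0)_J)$.
   Context: E-GCM $M=(M_{ij})_{i,j\in I_n}$: real, $M_{ii}=2$, $M_{ij}\le0$ ($i\ne j$), $M_{ij}\ne0\iff M_{ji}\ne0$, nonzero $M_{ij}M_{ji}$ either $\ge4$ or $=4\cos^2(\pi/m)$ with $m\ge3$ integer; nodes $\gamma_i$, adjacent iff $M_{ij}\ne0$. Positions $\lambda\in\mathbb{R}^n$; firing $\gamma_i$ allowed iff $\lambda_i>0$, replacing $\lambda_j$ by $\lambda_j-M_{ij}\lambda_i$. The numbers game fires nodes with positive population until none remain; a game sequence is the sequence of fired nodes. $W$: generators $s_i$, $s_i^2=e$, $(s_is_j)^{m_{ij}}=e$, $m_{ij}=k$ if $M_{ij}M_{ji}=4\cos^2(\pi/k)$ ($k\ge2$), $m_{ij}=\infty$ if $M_{ij}M_{ji}\ge4$; $\ell$ = length. $W_J=\langle s_j:j\in J\rangle$. $C_J$ = positions with $\lambda_j=0$ for $j\in J$ and $\lambda_i>0$ for $i\notin J$. *)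

theory Defs
  imports Complex_Main
begin

text \<open>Nodes are indexed by I_n = {0..<n}; M is an n x n real matrix given as a function.\<close>

definition egcm :: "(nat \<Rightarrow> nat \<Rightarrow> real) \<Rightarrow> nat \<Rightarrow> bool" where
  "egcm M n \<longleftrightarrow>
     (\<forall>i<n. M i i = 2) \<and>
     (\<forall>i<n. \<forall>j<n. i \<noteq> j \<longrightarrow>
        M i j \<le> 0 \<and> (M i j \<noteq> 0 \<longleftrightarrow> M j i \<noteq> 0) \<and>
        (M i j * M j i \<noteq> 0 \<longrightarrow>
           M i j * M j i \<ge> 4 \<or>
           (\<exists>m::nat. m \<ge> 3 \<and> M i j * M j i = 4 * (cos (pi / real m))^2)))"

text \<open>Coxeter group W as words over I_n modulo the defining relations
  s_i^2 = e and (s_i s_j)^k = e whenever M_ij M_ji = 4 cos^2(pi/k), k >= 2.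
  Since all generators are involutions, the monoid presentation gives the group.\<close>

definition cox_relators :: "(nat \<Rightarrow> nat \<Rightarrow> real) \<Rightarrow> nat \<Rightarrow> nat list set" where
  "cox_relators M n =
     {[i, i] | i. i < n} \<union>
     {concat (replicate k [i, j]) | i j k. i < n \<and> j < n \<and> i \<noteq> j \<and> k \<ge> 2 \<and>
        M i j * M j i = 4 * (cos (pi / real k))^2}"

definition cox_step :: "(nat \<Rightarrow> nat \<Rightarrow> real) \<Rightarrow> nat \<Rightarrow> (nat list \<times> nat list) set" where
  "cox_step M n = {(u @ r @ v, u @ v) | u r v. r \<in> cox_relators M n}"

definition cox_rel :: "(nat \<Rightarrow> nat \<Rightarrow> real) \<Rightarrow> nat \<Rightarrow> (nat list \<times> nat list) set" where
  "cox_rel M n = (cox_step M n \<union> (cox_step M n)\<inverse>)\<^sup>*"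

definition cox_group :: "(nat \<Rightarrow> nat \<Rightarrow> real) \<Rightarrow> nat \<Rightarrow> nat list set set" where
  "cox_group M n = lists {..<n} // cox_rel M n"

definition cox_length :: "nat list set \<Rightarrow> nat" where
  "cox_length c = (LEAST k. \<exists>w\<in>c. length w = k)"

definition parabolic :: "(nat \<Rightarrow> nat \<Rightarrow> real) \<Rightarrow> nat \<Rightarrow> nat set \<Rightarrow> nat list set set" where
  "parabolic M n J = {c \<in> cox_group M n. \<exists>w\<in>c. set w \<subseteq> J}"

definition longest_element :: "nat list set set \<Rightarrow> nat list set \<Rightarrow> bool" where
  "longest_element S w \<longleftrightarrow> w \<in> S \<and> (\<forall>v\<in>S. cox_length v \<le> cox_length w)"

definition fire :: "(nat \<Rightarrow> nat \<Rightarrow> real) \<Rightarrow> nat \<Rightarrow> (nat \<Rightarrow> real) \<Rightarrow> (nat \<Rightarrow> real)" where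
  "fire M i pos = (\<lambda>j. pos j - M i j * pos i)"

fun legal_play :: "(nat \<Rightarrow> nat \<Rightarrow> real) \<Rightarrow> nat \<Rightarrow> (nat \<Rightarrow> real) \<Rightarrow> nat list \<Rightarrow> bool" where
  "legal_play M n pos [] = True"
| "legal_play M n pos (i # s) = (i < n \<and> pos i > 0 \<and> legal_play M n (fire M i pos) s)"

definition play :: "(nat \<Rightarrow> nat \<Rightarrow> real) \<Rightarrow> (nat \<Rightarrow> real) \<Rightarrow> nat list \<Rightarrow> (nat \<Rightarrow> real)" where
  "play M pos s = fold (fire M) s pos"

definition terminal :: "nat \<Rightarrow> (nat \<Rightarrow> real) \<Rightarrow> bool" where
  "terminal n pos \<longleftrightarrow> (\<forall>i<n. \<not> pos i > 0)"

definition game_sequence :: "(nat \<Rightarrow> nat \<Rightarrow> real) \<Rightarrow> nat \<Rightarrow> (nat \<Rightarrow> real) \<Rightarrow> nat list \<Rightarrow> bool" where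
  "game_sequence M n pos s \<longleftrightarrow> legal_play M n pos s \<and> terminal n (play M pos s)"

definition infinite_game :: "(nat \<Rightarrow> nat \<Rightarrow> real) \<Rightarrow> nat \<Rightarrow> (nat \<Rightarrow> real) \<Rightarrow> (nat \<Rightarrow> nat) \<Rightarrow> bool" where
  "infinite_game M n pos f \<longleftrightarrow> (\<forall>k. legal_play M n pos (map f [0..<k]))"

definition in_C :: "nat \<Rightarrow> nat set \<Rightarrow> (nat \<Rightarrow> real) \<Rightarrow> bool" where
  "in_C n J pos \<longleftrightarrow> (\<forall>j\<in>J. pos j = 0) \<and> (\<forall>i<n. i \<notin> J \<longrightarrow> pos i > 0)"

end

theory Submission
  imports Defs "HOL-Computational_Algebra.Polynomial"
begin


lemma play_Nil[simp]: "play M pos [] = pos"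
  by (simp add: play_def)
lemma play_Cons[simp]: "play M pos (i#w) = play M (fire M i pos) w"
  by (simp add: play_def)
lemma play_append[simp]: "play M pos (u@v) = play M (play M pos u) v"
  by (simp add: play_def)
lemma fire_fire: "M i i = 2 \<Longrightarrow> fire M i (fire M i pos) = pos"
  by (simp add: fire_def)
lemma play_rev_inv: "\<forall>i\<in>set w. M i i = 2 \<Longrightarrow> play M (play M pos w) (rev w) = pos"
  by (induction w arbitrary: pos) (auto simp: fire_fire)
lemma play_rev_inv2: "\<forall>i\<in>set w. M i i = 2 \<Longrightarrow> play M (play M pos (rev w)) w = pos"
  using play_rev_inv[of "rev w" M pos] by simp
lemma fire_neg: "fire M i (\<lambda>j. - pos j) = (\<lambda>j. - fire M i pos j)"
  by (simp add: fire_def)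
lemma play_neg: "play M (\<lambda>j. - pos j) w = (\<lambda>j. - play M pos w j)"
  by (induction w arbitrary: pos) (auto simp: fire_neg)
lemma fire_add: "fire M i (\<lambda>j. p j + q j) = (\<lambda>j. fire M i p j + fire M i q j)"
  by (auto simp: fire_def algebra_simps)
lemma play_add: "play M (\<lambda>j. p j + q j) w = (\<lambda>j. play M p w j + play M q w j)"
  by (induction w arbitrary: p q) (auto simp: fire_add)
lemma fire_smult: "fire M i (\<lambda>j. c * p j) = (\<lambda>j. c * fire M i p j)"
  by (auto simp: fire_def algebra_simps)
lemma play_smult: "play M (\<lambda>j. c * p j) w = (\<lambda>j. c * play M p w j)"
  by (induction w arbitrary: p) (auto simp: fire_smult)
lemma fire_zero: "pos i = 0 \<Longrightarrow> fire M i pos = pos"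
  by (simp add: fire_def)

fun alt :: "nat \<Rightarrow> nat \<Rightarrow> nat \<Rightarrow> nat list" where
  "alt i j 0 = []"
| "alt i j (Suc m) = i # alt j i m"

lemma alt_snoc: "alt i j (Suc m) = alt i j m @ [if even m then i else j]"
  by (induction m arbitrary: i j) auto

lemma length_alt[simp]: "length (alt i j m) = m"
  by (induction m arbitrary: i j) auto

lemma set_alt: "set (alt i j m) \<subseteq> {i, j}"
  by (induction m arbitrary: i j) auto

lemma alt_append: "alt i j m @ alt (if even m then i else j) (if even m then j else i) p = alt i j (m+p)"
  by (induction m arbitrary: i j) auto

lemma rev_alt: "rev (alt j i m) = (if even m then alt i j m else alt j i m)"
proof (induction m arbitrary: i j)
  case 0 then show ?case by simp
next
  case (Suc m)
  have 1: "rev (alt j i (Suc m)) = (if even m then j else i) # rev (alt j i m)"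
    by (simp only: alt_snoc rev_append) simp
  show ?case
  proof (cases "even m")
    case True
    then show ?thesis using 1 by (simp add: Suc.IH)
  next
    case False
    then show ?thesis using 1 by (simp add: Suc.IH)
  qed
qed

lemma alt_double: "alt i j m @ rev (alt j i m) = alt i j (m+m)"
  using alt_append[of i j m m] by (auto simp: rev_alt split: if_splits)

lemma concat_rep_alt: "concat (replicate k [i,j]) = alt i j (2*k)"
  by (induction k) auto

lemma cox_rel_refl[simp]: "(w,w) \<in> cox_rel M n"
  by (simp add: cox_rel_def)

lemma cox_rel_sym: "(a,b) \<in> cox_rel M n \<Longrightarrow> (b,a) \<in> cox_rel M n"
proof -
  assume "(a,b) \<in> cox_rel M n"
  then have "(b,a) \<in> ((cox_step M n \<union> (cox_step M n)\<inverse>)\<^sup>*)\<inverse>"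
    by (simp add: cox_rel_def)
  also have "\<dots> = ((cox_step M n \<union> (cox_step M n)\<inverse>)\<inverse>)\<^sup>*"
    by (simp add: rtrancl_converse)
  also have "(cox_step M n \<union> (cox_step M n)\<inverse>)\<inverse> = cox_step M n \<union> (cox_step M n)\<inverse>"
    by auto
  finally show ?thesis by (simp add: cox_rel_def)
qed

lemma cox_rel_trans: "(a,b) \<in> cox_rel M n \<Longrightarrow> (b,c) \<in> cox_rel M n \<Longrightarrow> (a,c) \<in> cox_rel M n"
  unfolding cox_rel_def by (rule rtrancl_trans)

lemma cox_step_cong: "(a,b) \<in> cox_step M n \<Longrightarrow> (u@a@v, u@b@v) \<in> cox_step M n"
proof -
  assume "(a,b) \<in> cox_step M n"
  then obtain u' r v' where "a = u'@r@v'" "b = u'@v'" "r \<in> cox_relators M n"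
    by (auto simp: cox_step_def)
  then have "u@a@v = (u@u')@r@(v'@v)" "u@b@v = (u@u')@(v'@v)" by auto
  with \<open>r \<in> cox_relators M n\<close> show ?thesis unfolding cox_step_def by blast
qed

lemma cox_rel_cong: "(a,b) \<in> cox_rel M n \<Longrightarrow> (u@a@v, u@b@v) \<in> cox_rel M n"
  unfolding cox_rel_def
proof (induction rule: rtrancl_induct)
  case base then show ?case by simp
next
  case (step y z)
  then have "(u@y@v, u@z@v) \<in> cox_step M n \<union> (cox_step M n)\<inverse>"
    using cox_step_cong by blast
  with step show ?case by (meson rtrancl.rtrancl_into_rtrancl)
qed

lemma cox_rel_app_left: "(a,b) \<in> cox_rel M n \<Longrightarrow> (u@a, u@b) \<in> cox_rel M n"
  using cox_rel_cong[of a b M n u "[]"] by simp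
lemma cox_rel_app_right: "(a,b) \<in> cox_rel M n \<Longrightarrow> (a@v, b@v) \<in> cox_rel M n"
  using cox_rel_cong[of a b M n "[]" v] by simp
lemma cox_rel_Cons: "(a,b) \<in> cox_rel M n \<Longrightarrow> (i#a, i#b) \<in> cox_rel M n"
  using cox_rel_cong[of a b M n "[i]" "[]"] by simp
lemma cox_rel_app: "(a,b) \<in> cox_rel M n \<Longrightarrow> (c,d) \<in> cox_rel M n \<Longrightarrow> (a@c, b@d) \<in> cox_rel M n"
  by (meson cox_rel_app_left cox_rel_app_right cox_rel_trans)

lemma cox_rel_relator: "r \<in> cox_relators M n \<Longrightarrow> (u@r@v, u@v) \<in> cox_rel M n"
  unfolding cox_rel_def cox_step_def by blast

lemma cox_rel_ii: "i < n \<Longrightarrow> (u@[i,i]@v, u@v) \<in> cox_rel M n"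
  by (rule cox_rel_relator) (auto simp: cox_relators_def)

lemma cox_rel_ii': "i < n \<Longrightarrow> (u@[i,i], u) \<in> cox_rel M n"
  using cox_rel_ii[of i n u "[]" M] by simp

lemma relators_rev: "r \<in> cox_relators M n \<Longrightarrow> rev r \<in> cox_relators M n"
proof -
  assume "r \<in> cox_relators M n"
  then consider (a) i where "r = [i,i]" "i < n"
    | (b) i j k where "r = concat (replicate k [i,j])" "i < n" "j < n" "i \<noteq> j" "k \<ge> 2"
        "M i j * M j i = 4 * (cos (pi / real k))^2"
    unfolding cox_relators_def by blast
  then show ?thesis
  proof cases
    case a then show ?thesis by (auto simp: cox_relators_def)
  next
    case (b i j k)
    have "rev r = alt j i (2*k)"
      using b(1) rev_alt[of i j "2*k"] by (simp add: concat_rep_alt)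
    also have "\<dots> = concat (replicate k [j,i])" by (simp add: concat_rep_alt mult.commute)
    finally have rr: "rev r = concat (replicate k [j,i])" .
    have "\<exists>i' j' k'. rev r = concat (replicate k' [i',j']) \<and> i' < n \<and> j' < n \<and> i' \<noteq> j' \<and> k' \<ge> 2 \<and>
        M i' j' * M j' i' = 4 * (cos (pi / real k'))^2"
      apply (rule exI[of _ j], rule exI[of _ i], rule exI[of _ k])
      using b rr by (simp add: mult.commute)
    then show ?thesis unfolding cox_relators_def by blast
  qed
qed

lemma cox_step_rev: "(a,b) \<in> cox_step M n \<Longrightarrow> (rev a, rev b) \<in> cox_step M n"
proof -
  assume "(a,b) \<in> cox_step M n"
  then obtain u r v where "a = u@r@v" "b = u@v" "r \<in> cox_relators M n"
    by (auto simp: cox_step_def)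
  then have "rev a = rev v @ rev r @ rev u" "rev b = rev v @ rev u" by auto
  with relators_rev[OF \<open>r \<in> cox_relators M n\<close>] show ?thesis unfolding cox_step_def by blast
qed

lemma cox_rel_rev: "(a,b) \<in> cox_rel M n \<Longrightarrow> (rev a, rev b) \<in> cox_rel M n"
  unfolding cox_rel_def
proof (induction rule: rtrancl_induct)
  case base then show ?case by simp
next
  case (step y z)
  then have "(rev y, rev z) \<in> cox_step M n \<union> (cox_step M n)\<inverse>"
    using cox_step_rev by blast
  with step show ?case by (meson rtrancl.rtrancl_into_rtrancl)
qed

lemma relator_lists: "r \<in> cox_relators M n \<Longrightarrow> set r \<subseteq> {..<n}"
  unfolding cox_relators_def by (auto simp: concat_rep_alt dest!: subsetD[OF set_alt])

lemma cox_rel_lists: "(a,b) \<in> cox_rel M n \<Longrightarrow> (set a \<subseteq> {..<n} \<longleftrightarrow> set b \<subseteq> {..<n})"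
  unfolding cox_rel_def
proof (induction rule: rtrancl_induct)
  case base then show ?case by simp
next
  case (step y z)
  from step(2) obtain u r v where r: "r \<in> cox_relators M n" and
    d: "(y = u@r@v \<and> z = u@v) \<or> (z = u@r@v \<and> y = u@v)" unfolding cox_step_def by blast
  have "set y \<subseteq> {..<n} \<longleftrightarrow> set z \<subseteq> {..<n}" using d relator_lists[OF r] by auto
  with step(3) show ?case by simp
qed

lemma rev_self_cancel: "set w \<subseteq> {..<n} \<Longrightarrow> (rev w @ w, []) \<in> cox_rel M n"
proof (induction w)
  case Nil then show ?case by simp
next
  case (Cons x w)
  have "(rev w @ [x,x] @ w, rev w @ w) \<in> cox_rel M n"
    using Cons.prems by (intro cox_rel_ii) auto
  then show ?case using Cons by (auto intro: cox_rel_trans)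
qed

lemma braid: "concat (replicate m [i,j]) \<in> cox_relators M n \<Longrightarrow> i < n \<Longrightarrow> j < n \<Longrightarrow>
   (alt i j m, alt j i m) \<in> cox_rel M n"
proof -
  assume r: "concat (replicate m [i,j]) \<in> cox_relators M n" and ij: "i < n" "j < n"
  have s: "set (alt j i m) \<subseteq> {..<n}" using set_alt[of j i m] ij by auto
  have "(alt i j m @ (rev (alt j i m) @ alt j i m), alt i j m @ []) \<in> cox_rel M n"
    by (rule cox_rel_app_left, rule rev_self_cancel[OF s])
  then have 1: "(alt i j m, alt i j (m+m) @ alt j i m) \<in> cox_rel M n"
    by (simp add: cox_rel_sym alt_double[symmetric])
  have "alt i j (m+m) = concat (replicate m [i,j])" by (simp add: concat_rep_alt mult_2)
  then have "(alt i j (m+m) @ alt j i m, alt j i m) \<in> cox_rel M n"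
    using cox_rel_relator[OF r, of "[]" "alt j i m"] by simp
  with 1 show ?thesis by (rule cox_rel_trans)
qed



fun legalA :: "(nat \<Rightarrow> nat \<Rightarrow> real) \<Rightarrow> nat set \<Rightarrow> (nat \<Rightarrow> real) \<Rightarrow> nat list \<Rightarrow> bool" where
  "legalA M A pos [] = True"
| "legalA M A pos (i # s) = (i \<in> A \<and> pos i > 0 \<and> legalA M A (fire M i pos) s)"

lemma legalA_append: "legalA M A pos (u@v) \<longleftrightarrow> legalA M A pos u \<and> legalA M A (play M pos u) v"
  by (induction u arbitrary: pos) auto

lemma legalA_snoc: "legalA M A pos (u@[i]) \<longleftrightarrow> legalA M A pos u \<and> i \<in> A \<and> play M pos u i > 0"
  by (simp add: legalA_append)

fun hs :: "real \<Rightarrow> real \<Rightarrow> real \<Rightarrow> real \<Rightarrow> nat \<Rightarrow> real" where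
  "hs a b x y 0 = - y"
| "hs a b x y (Suc 0) = x"
| "hs a b x y (Suc (Suc t)) = (if even t then a else b) * hs a b x y (Suc t) - hs a b x y t"

definition SE where "SE a b x y L = (\<Sum>t<L. if even t then hs a b x y (Suc t) else 0)"
definition SO where "SO a b x y L = (\<Sum>t<L. if even t then 0 else hs a b x y (Suc t))"

lemma alt_play:
  assumes "i \<noteq> j" "M i i = 2" "M j j = 2"
  shows "(\<forall>l. play M pos (alt i j L) l = pos l - M i l * SE (- M i j) (- M j i) (pos i) (pos j) L
                                          - M j l * SO (- M i j) (- M j i) (pos i) (pos j) L)
     \<and> play M pos (alt i j L) (if even L then i else j) = hs (- M i j) (- M j i) (pos i) (pos j) (Suc L)
     \<and> play M pos (alt i j L) (if even L then j else i) = - hs (- M i j) (- M j i) (pos i) (pos j) L"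
proof (induction L)
  case 0
  then show ?case by (simp add: SE_def SO_def)
next
  case (Suc L)
  define Q where "Q = play M pos (alt i j L)"
  let ?h = "hs (- M i j) (- M j i) (pos i) (pos j)"
  have Q: "\<And>l. Q l = pos l - M i l * SE (- M i j) (- M j i) (pos i) (pos j) L
                                          - M j l * SO (- M i j) (- M j i) (pos i) (pos j) L"
          "Q (if even L then i else j) = ?h (Suc L)"
          "Q (if even L then j else i) = - ?h L"
    using Suc.IH unfolding Q_def by auto
  have P: "play M pos (alt i j (Suc L)) = fire M (if even L then i else j) Q"
    by (simp add: alt_snoc Q_def del: alt.simps)
  show ?case
  proof (cases "even L")
    case True
    have "\<forall>l. fire M i Q l = pos l - M i l * SE (- M i j) (- M j i) (pos i) (pos j) (Suc L)
                                          - M j l * SO (- M i j) (- M j i) (pos i) (pos j) (Suc L)"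
      using Q True by (simp add: fire_def SE_def SO_def algebra_simps)
    moreover have "fire M i Q j = ?h (Suc (Suc L))"
      using Q True by (simp add: fire_def algebra_simps)
    moreover have "fire M i Q i = - ?h (Suc L)"
      using Q True assms by (simp add: fire_def algebra_simps)
    ultimately show ?thesis using P True by simp
  next
    case False
    have "\<forall>l. fire M j Q l = pos l - M i l * SE (- M i j) (- M j i) (pos i) (pos j) (Suc L)
                                          - M j l * SO (- M i j) (- M j i) (pos i) (pos j) (Suc L)"
      using Q False by (simp add: fire_def SE_def SO_def algebra_simps)
    moreover have "fire M j Q i = ?h (Suc (Suc L))"
      using Q False by (simp add: fire_def algebra_simps)
    moreover have "fire M j Q j = - ?h (Suc L)"
      using Q False assms by (simp add: fire_def algebra_simps)
    ultimately show ?thesis using P False by simp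
  qed
qed

lemma alt_legal:
  assumes "i \<noteq> j" "M i i = 2" "M j j = 2" "i \<in> A" "j \<in> A"
  shows "legalA M A pos (alt i j L) \<longleftrightarrow> (\<forall>t<L. hs (- M i j) (- M j i) (pos i) (pos j) (Suc t) > 0)"
proof (induction L)
  case 0 then show ?case by simp
next
  case (Suc L)
  have "legalA M A pos (alt i j (Suc L)) \<longleftrightarrow> legalA M A pos (alt i j L) \<and>
      play M pos (alt i j L) (if even L then i else j) > 0"
    using assms by (simp add: alt_snoc legalA_snoc del: alt.simps)
  also have "\<dots> \<longleftrightarrow> (\<forall>t<Suc L. hs (- M i j) (- M j i) (pos i) (pos j) (Suc t) > 0)"
    using Suc.IH alt_play[of i j M, OF assms(1-3), of pos L] by (auto simp: less_Suc_eq)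
  finally show ?case .
qed

section \<open>Symmetrization and trigonometry\<close>

fun gs :: "real \<Rightarrow> real \<Rightarrow> real \<Rightarrow> nat \<Rightarrow> real" where
  "gs c u v 0 = u"
| "gs c u v (Suc 0) = v"
| "gs c u v (Suc (Suc t)) = 2 * c * gs c u v (Suc t) - gs c u v t"

lemma hs_gs:
  assumes "a > 0" "b > 0"
  shows "hs a b x y t = (if even t then sqrt a else sqrt b) *
            gs (sqrt a * sqrt b / 2) (- y / sqrt a) (x / sqrt b) t"
proof -
  let ?F = "\<lambda>t. (if even t then sqrt a else sqrt b) * gs (sqrt a * sqrt b / 2) (- y / sqrt a) (x / sqrt b) t"
  have sa: "sqrt a * sqrt a = a" "sqrt b * sqrt b = b" using assms by auto
  have "hs a b x y t = ?F t \<and> hs a b x y (Suc t) = ?F (Suc t)"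
  proof (induction t)
    case 0 then show ?case using assms by simp
  next
    case (Suc t)
    then have e: "hs a b x y t = ?F t" "hs a b x y (Suc t) = ?F (Suc t)" by auto
    have "hs a b x y (Suc (Suc t)) = (if even t then a else b) * ?F (Suc t) - ?F t"
      using e by simp
    also have "\<dots> = ?F (Suc (Suc t))"
    proof -
      define g0 where "g0 = gs (sqrt a * sqrt b / 2) (- y / sqrt a) (x / sqrt b) t"
      define g1 where "g1 = gs (sqrt a * sqrt b / 2) (- y / sqrt a) (x / sqrt b) (Suc t)"
      have G: "gs (sqrt a * sqrt b / 2) (- y / sqrt a) (x / sqrt b) (Suc (Suc t)) = sqrt a * sqrt b * g1 - g0"
        by (simp add: g0_def g1_def)
      show ?thesis
      proof (cases "even t")
        case True
        have "sqrt a * (sqrt a * sqrt b * g1 - g0) = (sqrt a * sqrt a) * sqrt b * g1 - sqrt a * g0"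
          by (simp add: algebra_simps)
        then show ?thesis using True G assms unfolding sa by (simp add: g0_def g1_def algebra_simps)
      next
        case False
        have "sqrt b * (sqrt a * sqrt b * g1 - g0) = (sqrt b * sqrt b) * sqrt a * g1 - sqrt b * g0"
          by (simp add: algebra_simps)
        then show ?thesis using False G assms unfolding sa by (simp add: g0_def g1_def algebra_simps)
      qed
    qed
    finally show ?case using e by simp
  qed
  then show ?thesis by simp
qed



lemma sin_rec: "sin ((x::real) + t) = 2 * cos t * sin x - sin (x - t)"
  by (simp add: sin_add sin_diff algebra_simps)

lemma gs_closed:
  shows "gs (cos th) u v t * sin th = v * sin (real t * th) - u * sin ((real t - 1) * th)"
proof -
  let ?F = "\<lambda>t::nat. v * sin (real t * th) - u * sin ((real t - 1) * th)"
  have "gs (cos th) u v t * sin th = ?F t \<and> gs (cos th) u v (Suc t) * sin th = ?F (Suc t)"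
  proof (induction t)
    case 0 then show ?case by simp
  next
    case (Suc t)
    then have e: "gs (cos th) u v t * sin th = ?F t" "gs (cos th) u v (Suc t) * sin th = ?F (Suc t)"
      by auto
    have "gs (cos th) u v (Suc (Suc t)) * sin th
        = 2 * cos th * (gs (cos th) u v (Suc t) * sin th) - gs (cos th) u v t * sin th"
      by (simp add: algebra_simps)
    also have "\<dots> = 2 * cos th * ?F (Suc t) - ?F t" using e by simp
    also have "\<dots> = ?F (Suc (Suc t))"
    proof -
      have 1: "sin (real (Suc (Suc t)) * th) = 2 * cos th * sin (real (Suc t) * th) - sin (real t * th)"
        using sin_rec[of "real (Suc t) * th" th] by (simp add: algebra_simps)
      have 2: "sin ((real (Suc (Suc t)) - 1) * th) = 2 * cos th * sin ((real (Suc t) - 1) * th) - sin ((real t - 1) * th)"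
        using sin_rec[of "(real (Suc t) - 1) * th" th] by (simp add: algebra_simps)
      show ?thesis unfolding 1 2 by (simp add: algebra_simps)
    qed
    finally show ?case using e by simp
  qed
  then show ?thesis by simp
qed

lemma sin_sum_zero:
  assumes "real k * th = pi" "sin th \<noteq> 0"
  shows "(\<Sum>s<k. sin (x + 2 * real s * th)) = 0"
proof -
  let ?F = "\<lambda>s::nat. cos (x + (2 * real s - 1) * th)"
  have "\<And>s. 2 * sin th * sin (x + 2 * real s * th) = ?F s - ?F (Suc s)"
  proof -
    fix s
    have "cos (x + 2 * real s * th - th) - cos (x + 2 * real s * th + th) = 2 * sin th * sin (x + 2 * real s * th)"
      by (simp add: cos_add cos_diff algebra_simps)
    moreover have "x + 2 * real s * th - th = x + (2 * real s - 1) * th"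
      "x + 2 * real s * th + th = x + (2 * real (Suc s) - 1) * th" by (simp_all add: algebra_simps)
    ultimately show "2 * sin th * sin (x + 2 * real s * th) = ?F s - ?F (Suc s)" by simp
  qed
  then have "2 * sin th * (\<Sum>s<k. sin (x + 2 * real s * th)) = (\<Sum>s<k. ?F s - ?F (Suc s))"
    by (simp add: sum_distrib_left)
  also have "\<dots> = ?F 0 - ?F k" by (rule sum_lessThan_telescope')
  also have "?F k = ?F 0"
  proof -
    have e: "x + (2 * real k - 1) * th = (x - th) + 2 * pi" using assms(1) by (simp add: algebra_simps)
    have "cos (x + (2 * real k - 1) * th) = cos (x - th)" by (simp only: e cos_periodic)
    moreover have "cos (x + (2 * real 0 - 1) * th) = cos (x - th)" by simp
    ultimately show ?thesis by simp
  qed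
  finally show ?thesis using assms(2) by simp
qed

lemma sum_double: "(\<Sum>t<2*k. f t) = (\<Sum>s<k. f (2*s) + f (Suc (2*s)))"
  by (induction k) (auto simp: sum.distrib algebra_simps)

lemma SE_double: "SE a b x y (2*k) = (\<Sum>s<k. hs a b x y (Suc (2*s)))"
  unfolding SE_def by (simp add: sum_double)
lemma SO_double: "SO a b x y (2*k) = (\<Sum>s<k. hs a b x y (Suc (Suc (2*s))))"
  unfolding SO_def by (simp add: sum_double)

lemma sums_vanish:
  assumes "a > 0" "b > 0" "sqrt a * sqrt b / 2 = cos th" "real k * th = pi" "sin th \<noteq> 0"
  shows "SE a b x y (2*k) = 0 \<and> SO a b x y (2*k) = 0"
proof -
  let ?u = "- y / sqrt a" and ?v = "x / sqrt b"
  let ?g = "gs (cos th) ?u ?v"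
  have h: "\<And>t. hs a b x y t = (if even t then sqrt a else sqrt b) * ?g t"
    using hs_gs[OF assms(1,2)] assms(3) by simp
  have z0: "(\<Sum>s<k. sin (2 * real s * th)) = 0" using sin_sum_zero[OF assms(4,5), of 0] by simp
  have g1: "(\<Sum>s<k. ?g (Suc (2*s))) * sin th = 0"
  proof -
    have "(\<Sum>s<k. ?g (Suc (2*s))) * sin th = (\<Sum>s<k. ?g (Suc (2*s)) * sin th)"
      by (simp add: sum_distrib_right)
    also have "\<dots> = (\<Sum>s<k. ?v * sin (th + 2 * real s * th) - ?u * sin (0 + 2 * real s * th))"
      by (intro sum.cong refl, subst gs_closed) (simp add: algebra_simps)
    also have "\<dots> = ?v * (\<Sum>s<k. sin (th + 2 * real s * th)) - ?u * (\<Sum>s<k. sin (0 + 2 * real s * th))"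
      by (simp only: sum_subtractf sum_distrib_left)
    also have "\<dots> = 0" using sin_sum_zero[OF assms(4,5), of th] z0 by simp
    finally show ?thesis .
  qed
  have g2: "(\<Sum>s<k. ?g (Suc (Suc (2*s)))) * sin th = 0"
  proof -
    have "(\<Sum>s<k. ?g (Suc (Suc (2*s)))) * sin th = (\<Sum>s<k. ?g (Suc (Suc (2*s))) * sin th)"
      by (simp add: sum_distrib_right)
    also have "\<dots> = (\<Sum>s<k. ?v * sin (2 * th + 2 * real s * th) - ?u * sin (th + 2 * real s * th))"
      by (intro sum.cong refl, subst gs_closed) (simp add: algebra_simps)
    also have "\<dots> = ?v * (\<Sum>s<k. sin (2 * th + 2 * real s * th)) - ?u * (\<Sum>s<k. sin (th + 2 * real s * th))"
      by (simp only: sum_subtractf sum_distrib_left)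
    also have "\<dots> = 0" using sin_sum_zero[OF assms(4,5)] by simp
    finally show ?thesis .
  qed
  have "SE a b x y (2*k) = sqrt b * (\<Sum>s<k. ?g (Suc (2*s)))"
    unfolding SE_double by (simp add: h sum_distrib_left del: hs.simps)
  moreover have "SO a b x y (2*k) = sqrt a * (\<Sum>s<k. ?g (Suc (Suc (2*s))))"
    unfolding SO_double by (simp add: h sum_distrib_left del: hs.simps)
  ultimately show ?thesis using g1 g2 assms(5) by simp
qed



lemma egcm_diag: "egcm M n \<Longrightarrow> i < n \<Longrightarrow> M i i = 2"
  unfolding egcm_def by blast

lemma egcm_off: "egcm M n \<Longrightarrow> i < n \<Longrightarrow> j < n \<Longrightarrow> i \<noteq> j \<Longrightarrow>
   M i j \<le> 0 \<and> (M i j \<noteq> 0 \<longleftrightarrow> M j i \<noteq> 0) \<and>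
   (M i j * M j i \<noteq> 0 \<longrightarrow> M i j * M j i \<ge> 4 \<or>
      (\<exists>m::nat. m \<ge> 3 \<and> M i j * M j i = 4 * (cos (pi / real m))^2))"
  unfolding egcm_def by blast

lemma cos_pi_div_pos: "(k::nat) \<ge> 3 \<Longrightarrow> cos (pi / real k) > 0"
proof -
  assume k: "k \<ge> 3"
  have "pi * 2 < pi * real k" using k pi_gt_zero by (intro mult_strict_left_mono) auto
  then have "pi / real k < pi / 2" using k by (simp add: field_simps)
  moreover have "pi / real k > 0" using k by simp
  ultimately show ?thesis by (intro cos_gt_zero_pi) auto
qed

lemma cos_pi_div_nonneg: "(k::nat) \<ge> 2 \<Longrightarrow> cos (pi / real k) \<ge> 0"
proof -
  assume k: "k \<ge> 2"
  have "pi * 2 \<le> pi * real k" using k pi_gt_zero by (intro mult_left_mono) auto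
  then have "pi / real k \<le> pi / 2" using k by (simp add: field_simps)
  moreover have "pi / real k > 0" using k by simp
  ultimately show ?thesis by (intro cos_ge_zero) auto
qed

lemma sin_pi_div_pos: "(k::nat) \<ge> 2 \<Longrightarrow> sin (pi / real k) > 0"
proof -
  assume k: "k \<ge> 2"
  have "pi / real k < pi" using k pi_gt_zero by (simp add: divide_less_eq)
  moreover have "pi / real k > 0" using k by simp
  ultimately show ?thesis by (intro sin_gt_zero) auto
qed

lemma sqrt_cos: "(k::nat) \<ge> 2 \<Longrightarrow> a \<ge> 0 \<Longrightarrow> b \<ge> 0 \<Longrightarrow> a * b = 4 * (cos (pi / real k))^2 \<Longrightarrow>
    sqrt a * sqrt b / 2 = cos (pi / real k)"
proof -
  assume k: "k \<ge> 2" and ab: "a \<ge> 0" "b \<ge> 0" "a * b = 4 * (cos (pi / real k))^2"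
  have "sqrt a * sqrt b = sqrt (a * b)" by (simp add: real_sqrt_mult)
  also have "\<dots> = sqrt ((2 * cos (pi / real k))^2)" using ab(3) by (simp add: power_mult_distrib)
  also have "\<dots> = \<bar>2 * cos (pi / real k)\<bar>" by (rule real_sqrt_abs)
  also have "\<dots> = 2 * cos (pi / real k)" using cos_pi_div_nonneg[OF k] by simp
  finally show ?thesis by simp
qed

lemma hs00: "hs 0 0 x y (Suc 0) = x" "hs 0 0 x y (Suc (Suc 0)) = y"
   "hs 0 0 x y (Suc (Suc (Suc 0))) = - x" "hs 0 0 x y (Suc (Suc (Suc (Suc 0)))) = - y"
  by simp_all

lemma SE_SO_00: "SE 0 0 x y (2*2) = 0 \<and> SO 0 0 x y (2*2) = 0"
proof -
  have "SE 0 0 x y (2*2) = hs 0 0 x y (Suc 0) + hs 0 0 x y (Suc (Suc (Suc 0)))"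
    unfolding SE_double by (simp add: numeral_2_eq_2 del: hs.simps)
  moreover have "SO 0 0 x y (2*2) = hs 0 0 x y (Suc (Suc 0)) + hs 0 0 x y (Suc (Suc (Suc (Suc 0))))"
    unfolding SO_double by (simp add: numeral_2_eq_2 del: hs.simps)
  ultimately show ?thesis by (simp only: hs00) simp
qed

lemma relator_trivial:
  assumes "egcm M n" "r \<in> cox_relators M n"
  shows "play M pos r = pos"
proof -
  from assms(2) consider (a) i where "r = [i,i]" "i < n"
    | (b) i j k where "r = concat (replicate k [i,j])" "i < n" "j < n" "i \<noteq> j" "k \<ge> 2"
        "M i j * M j i = 4 * (cos (pi / real k))^2"
    unfolding cox_relators_def by blast
  then show ?thesis
  proof cases
    case a then show ?thesis using egcm_diag[OF assms(1)] by (simp add: fire_fire)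
  next
    case (b i j k)
    note off = egcm_off[OF assms(1) b(2,3,4)] egcm_off[OF assms(1) b(3,2) b(4)[symmetric]]
    have d: "M i i = 2" "M j j = 2" using egcm_diag[OF assms(1)] b by auto
    let ?a = "- M i j" and ?b = "- M j i" and ?x = "pos i" and ?y = "pos j"
    have S: "SE ?a ?b ?x ?y (2*k) = 0 \<and> SO ?a ?b ?x ?y (2*k) = 0"
    proof (cases "M i j = 0")
      case True
      then have "M j i = 0" using conjunct1[OF conjunct2[OF off(1)]] by simp
      then have "cos (pi / real k) = 0" using b(6) True by simp
      then have "k = 2" using cos_pi_div_pos[of k] b(5) by (cases "k \<ge> 3") auto
      then have e: "- M i j = 0" "- M j i = 0" "2 * k = 2 * 2" using True \<open>M j i = 0\<close> by simp_all
      show ?thesis unfolding e by (rule SE_SO_00)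
    next
      case False
      have o1: "M i j \<le> 0" using conjunct1[OF off(1)] .
      have o2: "M i j \<noteq> 0 \<longleftrightarrow> M j i \<noteq> 0" using conjunct1[OF conjunct2[OF off(1)]] .
      have o3: "M j i \<le> 0" using conjunct1[OF off(2)] .
      have pos: "?a > 0" "?b > 0" using o1 o2 o3 False by linarith+
      have c: "sqrt ?a * sqrt ?b / 2 = cos (pi / real k)"
        using sqrt_cos[OF b(5), of ?a ?b] pos b(6) by simp
      have "real k * (pi / real k) = pi" using b(5) by simp
      then show ?thesis
        using sums_vanish[OF pos c, of k] sin_pi_div_pos[OF b(5)] by simp
    qed
    have "play M pos r = play M pos (alt i j (2*k))" using b(1) by (simp add: concat_rep_alt)
    also have "\<dots> = pos"
    proof (rule ext)
      fix l
      have "play M pos (alt i j (2*k)) l = pos l - M i l * SE ?a ?b ?x ?y (2*k) - M j l * SO ?a ?b ?x ?y (2*k)"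
        using conjunct1[OF alt_play[of i j M, OF b(4) d, of pos "2*k"]] by blast
      then show "play M pos (alt i j (2*k)) l = pos l" using S by simp
    qed
    finally show ?thesis .
  qed
qed

lemma cox_rel_play:
  assumes "egcm M n" "(u, w) \<in> cox_rel M n"
  shows "play M pos u = play M pos w"
  using assms(2) unfolding cox_rel_def
proof (induction rule: rtrancl_induct)
  case base then show ?case by simp
next
  case (step y z)
  from step(2) obtain a r c where r: "r \<in> cox_relators M n" and
    d: "(y = a@r@c \<and> z = a@c) \<or> (z = a@r@c \<and> y = a@c)" unfolding cox_step_def by blast
  have "play M pos y = play M pos z" using d relator_trivial[OF assms(1) r] by auto
  with step(3) show ?case by simp
qed

section \<open>Positivity along alternating plays\<close>

lemma hs_pos_finite:
  assumes "a > 0" "b > 0" "(m::nat) \<ge> 2" "sqrt a * sqrt b / 2 = cos (pi / real m)" "x > 0" "y > 0"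
    "1 \<le> t" "t \<le> m"
  shows "hs a b x y t > 0"
proof -
  let ?th = "pi / real m"
  let ?u = "- y / sqrt a" and ?v = "x / sqrt b"
  have h: "hs a b x y t = (if even t then sqrt a else sqrt b) * gs (cos ?th) ?u ?v t"
    using hs_gs[OF assms(1,2)] assms(4) by simp
  have cl: "gs (cos ?th) ?u ?v t * sin ?th = ?v * sin (real t * ?th) + (y / sqrt a) * sin ((real t - 1) * ?th)"
    using gs_closed[of ?th ?u ?v t] by simp
  have m0: "real m > 0" using assms(3) by simp
  have s1: "sin (real t * ?th) \<ge> 0"
  proof (rule sin_ge_zero)
    show "0 \<le> real t * ?th" using m0 by simp
    have "real t * ?th \<le> real m * ?th" using assms(8) m0 by (intro mult_right_mono) auto
    then show "real t * ?th \<le> pi" using m0 by simp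
  qed
  have s2: "sin ((real t - 1) * ?th) \<ge> 0"
  proof (rule sin_ge_zero)
    show "0 \<le> (real t - 1) * ?th" using m0 assms(7) by simp
    have "(real t - 1) * ?th \<le> real m * ?th" using assms(8) m0 by (intro mult_right_mono) auto
    then show "(real t - 1) * ?th \<le> pi" using m0 by simp
  qed
  have "?v * sin (real t * ?th) + (y / sqrt a) * sin ((real t - 1) * ?th) > 0"
  proof (cases "t < m")
    case True
    have sp: "sin (real t * ?th) > 0"
    proof (rule sin_gt_zero)
      show "0 < real t * ?th" using m0 assms(7) by simp
      have "real t * ?th < real m * ?th" using True m0 by (intro mult_strict_right_mono) auto
      then show "real t * ?th < pi" using m0 by simp
    qed
    have vp: "?v > 0" "y / sqrt a > 0" using assms by auto
    have "?v * sin (real t * ?th) > 0" by (rule mult_pos_pos[OF vp(1) sp])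
    moreover have "(y / sqrt a) * sin ((real t - 1) * ?th) \<ge> 0"
      by (rule mult_nonneg_nonneg[OF less_imp_le[OF vp(2)] s2])
    ultimately show ?thesis by linarith
  next
    case False
    then have tm: "t = m" using assms(8) by simp
    have sp: "sin ((real t - 1) * ?th) > 0"
    proof (rule sin_gt_zero)
      show "0 < (real t - 1) * ?th" using m0 assms(3) tm by simp
      have "(real t - 1) * ?th < real m * ?th" using tm m0 by (intro mult_strict_right_mono) auto
      then show "(real t - 1) * ?th < pi" using m0 by simp
    qed
    have vp: "?v > 0" "y / sqrt a > 0" using assms by auto
    have "(y / sqrt a) * sin ((real t - 1) * ?th) > 0" by (rule mult_pos_pos[OF vp(2) sp])
    moreover have "?v * sin (real t * ?th) \<ge> 0"
      by (rule mult_nonneg_nonneg[OF less_imp_le[OF vp(1)] s1])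
    ultimately show ?thesis by linarith
  qed
  then have "gs (cos ?th) ?u ?v t * sin ?th > 0" using cl by simp
  then have "gs (cos ?th) ?u ?v t > 0" using sin_pi_div_pos[OF assms(3)]
    by (simp add: zero_less_mult_iff)
  then show ?thesis using h assms(1,2) by simp
qed

lemma gs_mono:
  assumes "c \<ge> 1" "u < 0" "v > 0"
  shows "0 < gs c u v (Suc t) \<and> gs c u v t \<le> gs c u v (Suc t)"
proof (induction t)
  case 0 then show ?case using assms by simp
next
  case (Suc t)
  have e: "gs c u v (Suc (Suc t)) = 2 * c * gs c u v (Suc t) - gs c u v t" by simp
  have "2 * c * gs c u v (Suc t) \<ge> 2 * gs c u v (Suc t)"
    using Suc assms(1) by (intro mult_right_mono) auto
  then show ?case using Suc e by linarith
qed

lemma hs_pos_inf: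
  assumes "a > 0" "b > 0" "a * b \<ge> 4" "x > 0" "y > 0"
  shows "hs a b x y (Suc t) > 0"
proof -
  have "sqrt a * sqrt b = sqrt (a * b)" by (simp add: real_sqrt_mult)
  also have "\<dots> \<ge> sqrt 4" using assms(3) by (rule real_sqrt_le_mono)
  also have "sqrt (4::real) = 2" using real_sqrt_abs[of 2] by simp
  finally have c: "sqrt a * sqrt b / 2 \<ge> 1" by simp
  have "0 < gs (sqrt a * sqrt b / 2) (- y / sqrt a) (x / sqrt b) (Suc t)"
    using gs_mono[OF c] assms by (simp add: divide_neg_pos)
  then show ?thesis using hs_gs[OF assms(1,2), of x y "Suc t"] assms(1,2) by simp
qed

lemma relator_alt: "i < n \<Longrightarrow> j < n \<Longrightarrow> i \<noteq> j \<Longrightarrow> k \<ge> 2 \<Longrightarrow>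
   M i j * M j i = 4 * (cos (pi / real k))^2 \<Longrightarrow> concat (replicate k [i,j]) \<in> cox_relators M n"
  unfolding cox_relators_def by (rule UnI2) blast

lemma polygon:
  assumes "egcm M n" "i < n" "j < n" "i \<noteq> j" "i \<in> A" "j \<in> A" "pos i > 0" "pos j > 0"
  shows "(\<exists>m\<ge>2. legalA M A pos (alt i j m) \<and> legalA M A pos (alt j i m) \<and>
            (alt i j m, alt j i m) \<in> cox_rel M n) \<or> (\<forall>L. legalA M A pos (alt i j L))"
proof -
  note off = egcm_off[OF assms(1-4)] egcm_off[OF assms(1,3,2) assms(4)[symmetric]]
  have d: "M i i = 2" "M j j = 2" using egcm_diag[OF assms(1)] assms by auto
  note L1 = alt_legal[of i j M A pos, OF assms(4) d assms(5,6)]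
  note L2 = alt_legal[of j i M A pos, OF assms(4)[symmetric] d(2,1) assms(6,5)]
  show ?thesis
  proof (cases "M i j = 0")
    case True
    then have Z: "M j i = 0" using conjunct1[OF conjunct2[OF off(1)]] by simp
    have "legalA M A pos (alt i j 2)" unfolding L1 using True Z assms(7,8)
      by (auto simp: less_Suc_eq numeral_2_eq_2)
    moreover have "legalA M A pos (alt j i 2)" unfolding L2 using True Z assms(7,8)
      by (auto simp: less_Suc_eq numeral_2_eq_2)
    moreover have "concat (replicate 2 [i,j]) \<in> cox_relators M n"
      using True assms(2-4) by (intro relator_alt) auto
    then have "(alt i j 2, alt j i 2) \<in> cox_rel M n" using braid assms(2,3) by blast
    ultimately show ?thesis by (intro disjI1 exI[of _ 2]) simp
  next
    case False
    have o1: "M i j \<le> 0" using conjunct1[OF off(1)] .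
    have o2: "M i j \<noteq> 0 \<longleftrightarrow> M j i \<noteq> 0" using conjunct1[OF conjunct2[OF off(1)]] .
    have o3: "M j i \<le> 0" using conjunct1[OF off(2)] .
    have pos: "- M i j > 0" "- M j i > 0" using o1 o2 o3 False by linarith+
    have ne: "M i j * M j i \<noteq> 0" using pos by simp
    have "M i j * M j i \<ge> 4 \<or> (\<exists>m::nat. m \<ge> 3 \<and> M i j * M j i = 4 * (cos (pi / real m))^2)"
      using conjunct2[OF conjunct2[OF off(1)]] ne by simp
    then consider "M i j * M j i \<ge> 4" | m where "m \<ge> 3" "M i j * M j i = 4 * (cos (pi / real m))^2"
      by blast
    then show ?thesis
    proof cases
      case 1
      have "(- M i j) * (- M j i) \<ge> 4" using 1 by simp
      then have "\<forall>L. legalA M A pos (alt i j L)" unfolding L1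
        using hs_pos_inf[OF pos _ assms(7,8)] by simp
      then show ?thesis by blast
    next
      case (2 m)
      have m2: "m \<ge> 2" using 2 by simp
      have c1: "sqrt (- M i j) * sqrt (- M j i) / 2 = cos (pi / real m)"
        using sqrt_cos[OF m2, of "- M i j" "- M j i"] pos 2 by simp
      have c2: "sqrt (- M j i) * sqrt (- M i j) / 2 = cos (pi / real m)"
        using c1 by (simp add: mult.commute)
      have "legalA M A pos (alt i j m)" unfolding L1
        using hs_pos_finite[OF pos m2 c1 assms(7,8)] by simp
      moreover have "legalA M A pos (alt j i m)" unfolding L2
        using hs_pos_finite[OF pos(2,1) m2 c2 assms(8,7)] by simp
      moreover have "concat (replicate m [i,j]) \<in> cox_relators M n"
        using assms(2-4) 2 m2 by (intro relator_alt) auto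
      then have "(alt i j m, alt j i m) \<in> cox_rel M n" using braid assms(2,3) by blast
      ultimately show ?thesis using m2 by (intro disjI1 exI[of _ m]) simp
    qed
  qed
qed



definition gameA where
  "gameA M A pos s \<longleftrightarrow> legalA M A pos s \<and> (\<forall>i\<in>A. \<not> play M pos s i > 0)"

lemma legalA_prefix: "legalA M A pos (u@v) \<Longrightarrow> legalA M A pos u"
  by (simp add: legalA_append)

lemma legalA_set: "legalA M A pos w \<Longrightarrow> set w \<subseteq> A"
  by (induction w arbitrary: pos) auto

lemma legalA_mono: "legalA M A pos w \<Longrightarrow> A \<subseteq> B \<Longrightarrow> legalA M B pos w"
  by (induction w arbitrary: pos) auto

lemma legalA_rev:
  assumes "\<forall>i\<in>A. M i i = 2" "legalA M A pos w"
  shows "legalA M A (\<lambda>j. - play M pos w j) (rev w) \<and>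
         play M (\<lambda>j. - play M pos w j) (rev w) = (\<lambda>j. - pos j)"
  using assms(2)
proof (induction w arbitrary: pos)
  case Nil then show ?case by simp
next
  case (Cons i w)
  then have i: "i \<in> A" "pos i > 0" and l: "legalA M A (fire M i pos) w" by auto
  note IH = Cons.IH[OF l]
  have d: "M i i = 2" using assms(1) i by auto
  have "play M pos (i # w) = play M (fire M i pos) w" by simp
  moreover have "(\<lambda>j. - fire M i pos j) i > 0" using i d by (simp add: fire_def)
  moreover have "fire M i (\<lambda>j. - fire M i pos j) = (\<lambda>j. - pos j)"
    using d by (simp add: fire_neg fire_fire)
  ultimately show ?case using IH i by (simp add: legalA_snoc)
qed

lemma extend_game:
  assumes "\<forall>t. legalA M A pos t \<longrightarrow> length t \<le> K" "legalA M A pos t"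
  shows "\<exists>u. gameA M A pos (t@u)"
  using assms(2)
proof (induction "K - length t" arbitrary: t rule: less_induct)
  case less
  show ?case
  proof (cases "\<forall>i\<in>A. \<not> play M pos t i > 0")
    case True
    then show ?thesis using less.prems by (intro exI[of _ "[]"]) (simp add: gameA_def)
  next
    case False
    then obtain i where i: "i \<in> A" "play M pos t i > 0" by auto
    then have l: "legalA M A pos (t@[i])" using less.prems by (simp add: legalA_snoc)
    then have "length (t@[i]) \<le> K" using assms(1) by blast
    then have "K - length (t@[i]) < K - length t" by simp
    from less.hyps[OF this l] obtain u where "gameA M A pos ((t@[i])@u)" by blast
    then show ?thesis by (intro exI[of _ "i#u"]) simp
  qed
qed

theorem strong_conv:
  assumes egcm: "egcm M n" and A: "A \<subseteq> {..<n}"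
  shows "gameA M A pos s \<Longrightarrow> (\<forall>t. legalA M A pos t \<longrightarrow> length t \<le> length s) \<and>
            (\<forall>t. gameA M A pos t \<longrightarrow> length t = length s \<and> (t, s) \<in> cox_rel M n)"
proof (induction "length s" arbitrary: pos s rule: less_induct)
  case less
  note gs = less.prems
  have main: "(legalA M A pos t \<longrightarrow> length t \<le> length s) \<and>
            (gameA M A pos t \<longrightarrow> length t = length s \<and> (t, s) \<in> cox_rel M n)" for t
  proof (cases t)
    case Nil
    have "gameA M A pos [] \<Longrightarrow> s = []"
    proof (rule ccontr)
      assume g: "gameA M A pos []" and "s \<noteq> []"
      then obtain i s' where "s = i # s'" by (cases s) auto
      then show False using g gs by (auto simp: gameA_def)
    qed
    then show ?thesis using Nil by auto
  next
    case (Cons j t')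
    show ?thesis
    proof (cases "legalA M A pos t")
      case False then show ?thesis by (simp add: gameA_def)
    next
      case True
      then have j: "j \<in> A" "pos j > 0" "legalA M A (fire M j pos) t'" using Cons by auto
      obtain i s' where s: "s = i # s'"
      proof (cases s)
        case Nil then show ?thesis using gs j by (auto simp: gameA_def)
      next
        case (Cons i s') then show ?thesis using that by blast
      qed
      have i: "i \<in> A" "pos i > 0" using gs s by (auto simp: gameA_def)
      have gs': "gameA M A (fire M i pos) s'" using gs s by (auto simp: gameA_def)
      have ls: "length s' < length s" using s by simp
      have IHi: "(\<forall>t. legalA M A (fire M i pos) t \<longrightarrow> length t \<le> length s') \<and>
            (\<forall>t. gameA M A (fire M i pos) t \<longrightarrow> length t = length s' \<and> (t, s') \<in> cox_rel M n)"
        by (rule less.hyps[OF ls gs'])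
      show ?thesis
      proof (cases "i = j")
        case True
        have "legalA M A pos t \<longrightarrow> length t \<le> length s" using IHi j True Cons s by auto
        moreover have "gameA M A pos t \<longrightarrow> length t = length s \<and> (t, s) \<in> cox_rel M n"
        proof
          assume "gameA M A pos t"
          then have "gameA M A (fire M i pos) t'" using Cons True by (simp add: gameA_def)
          then have "length t' = length s' \<and> (t', s') \<in> cox_rel M n" using IHi by blast
          then show "length t = length s \<and> (t, s) \<in> cox_rel M n"
            using Cons s True by (auto intro: cox_rel_Cons)
        qed
        ultimately show ?thesis by blast
      next
        case False
        have ijn: "i < n" "j < n" using A i j by auto
        from polygon[OF egcm ijn False i(1) j(1) i(2) j(2)]
        consider (fin) m where "m \<ge> 2" "legalA M A pos (alt i j m)" "legalA M A pos (alt j i m)"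
            "(alt i j m, alt j i m) \<in> cox_rel M n"
          | (inf) "\<forall>L. legalA M A pos (alt i j L)" by blast
        then show ?thesis
        proof cases
          case inf
          then have "legalA M A pos (alt i j (Suc (Suc (length s'))))" by blast
          then have "legalA M A (fire M i pos) (alt j i (Suc (length s')))" by simp
          then have "Suc (length s') \<le> length s'" using IHi by (metis length_alt)
          then show ?thesis by simp
        next
          case (fin m)
          then obtain m' where m: "m = Suc m'" by (cases m) auto
          have la: "legalA M A (fire M i pos) (alt j i m')" using fin(2) m by simp
          obtain u where gu: "gameA M A (fire M i pos) (alt j i m' @ u)"
            using extend_game[OF conjunct1[OF IHi] la] by blast
          then have lu: "length (alt j i m' @ u) = length s'" and ru: "(alt j i m' @ u, s') \<in> cox_rel M n"
            using IHi by blast+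
          have rho: "play M pos (alt i j m) = play M pos (alt j i m)"
            using cox_rel_play[OF egcm fin(4)] .
          have g1: "gameA M A pos (alt i j m @ u)" using gu i m by (simp add: gameA_def)
          have g2: "gameA M A pos (alt j i m @ u)"
            using g1 fin(3) rho by (simp add: gameA_def legalA_append)
          have g3: "gameA M A (fire M j pos) (alt i j m' @ u)" using g2 m by (simp add: gameA_def)
          have lt: "length (alt i j m' @ u) < length s" using lu s by simp
          have IHj: "(\<forall>t. legalA M A (fire M j pos) t \<longrightarrow> length t \<le> length (alt i j m' @ u)) \<and>
            (\<forall>t. gameA M A (fire M j pos) t \<longrightarrow> length t = length (alt i j m' @ u) \<and> (t, alt i j m' @ u) \<in> cox_rel M n)"
            using less.hyps[OF lt g3] .
          have "legalA M A pos t \<longrightarrow> length t \<le> length s" using IHj j Cons s lu by auto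
          moreover have "gameA M A pos t \<longrightarrow> length t = length s \<and> (t, s) \<in> cox_rel M n"
          proof
            assume "gameA M A pos t"
            then have "gameA M A (fire M j pos) t'" using Cons by (simp add: gameA_def)
            then have 1: "length t' = length (alt i j m' @ u)" and 2: "(t', alt i j m' @ u) \<in> cox_rel M n"
              using IHj by blast+
            have "(t, alt j i m @ u) \<in> cox_rel M n" using cox_rel_Cons[OF 2, of j] Cons m by simp
            moreover have "(alt j i m @ u, alt i j m @ u) \<in> cox_rel M n"
              using cox_rel_app_right[OF cox_rel_sym[OF fin(4)]] .
            moreover have "(alt i j m @ u, s) \<in> cox_rel M n"
              using cox_rel_Cons[OF ru, of i] m s by simp
            ultimately have "(t, s) \<in> cox_rel M n" by (blast intro: cox_rel_trans)
            moreover have "length t = length s" using 1 lu Cons s by simp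
            ultimately show "length t = length s \<and> (t, s) \<in> cox_rel M n" by simp
          qed
          ultimately show ?thesis by blast
        qed
      qed
    qed
  qed
  then show ?case by blast
qed



abbreviation cls where "cls M n w \<equiv> cox_rel M n `` {w}"

lemma cls_mem: "w \<in> cls M n w" by simp

lemma cls_eq: "(a,b) \<in> cox_rel M n \<Longrightarrow> cls M n a = cls M n b"
  by (auto intro: cox_rel_trans cox_rel_sym)

lemma cls_in_group: "set w \<subseteq> {..<n} \<Longrightarrow> cls M n w \<in> cox_group M n"
  unfolding cox_group_def by (rule quotientI) (simp add: in_lists_conv_set subset_iff)

lemma ell_le_len: "cox_length (cls M n w) \<le> length w"
  unfolding cox_length_def by (rule Least_le) auto

lemma ell_witness: "\<exists>t. (w, t) \<in> cox_rel M n \<and> length t = cox_length (cls M n w)"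
proof -
  have "\<exists>k. \<exists>t\<in>cls M n w. length t = k" by (rule exI[of _ "length w"], rule bexI[of _ w]) auto
  then have "\<exists>t\<in>cls M n w. length t = cox_length (cls M n w)"
    unfolding cox_length_def by (rule LeastI_ex)
  then show ?thesis by auto
qed

lemma group_cls: "c \<in> cox_group M n \<Longrightarrow> \<exists>w. set w \<subseteq> {..<n} \<and> c = cls M n w"
  unfolding cox_group_def by (auto elim!: quotientE simp: in_lists_conv_set subset_iff)

lemma legalA_restrict: "legalA M B pos w \<Longrightarrow> set w \<subseteq> A \<Longrightarrow> legalA M A pos w"
  by (induction w arbitrary: pos) auto

lemma neg_neg: "(\<lambda>j. - (- (f::nat \<Rightarrow> real) j)) = f" by simp

definition generic :: "(nat \<Rightarrow> nat \<Rightarrow> real) \<Rightarrow> nat \<Rightarrow> (nat \<Rightarrow> real) \<Rightarrow> bool" where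
  "generic M n lam \<longleftrightarrow> (\<forall>w k. set w \<subseteq> {..<n} \<longrightarrow> k < n \<longrightarrow> play M lam w k \<noteq> 0)"

lemma diagA: "egcm M n \<Longrightarrow> A \<subseteq> {..<n} \<Longrightarrow> \<forall>i\<in>A. M i i = 2"
  using egcm_diag by blast

lemma back_step:
  assumes egcm: "egcm M n" and A: "A \<subseteq> {..<n}" and lp: "\<forall>k\<in>A. lam k \<ge> 0"
    and l: "legalA M A lam q" and i: "i \<in> A" and neg: "play M lam q i < 0"
  shows "\<exists>y. legalA M A lam y \<and> (y @ [i], q) \<in> cox_rel M n \<and> length y + 1 = length q"
proof -
  define nu where "nu = (\<lambda>j. - play M lam q j)"
  have d: "\<forall>i\<in>A. M i i = 2" using diagA[OF egcm A] .
  have r1: "legalA M A nu (rev q)" "play M nu (rev q) = (\<lambda>j. - lam j)"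
    using legalA_rev[of A M, OF d l] unfolding nu_def by auto
  have g1: "gameA M A nu (rev q)" using r1 lp by (force simp: gameA_def)
  note SC = strong_conv[OF egcm A g1]
  have li: "legalA M A nu [i]" using i neg by (simp add: nu_def)
  obtain z where gz: "gameA M A nu ([i] @ z)"
    using extend_game[OF conjunct1[OF SC] li] by blast
  then have len: "length (i # z) = length (rev q)" and rel: "(i # z, rev q) \<in> cox_rel M n"
    using SC by auto
  have end1: "play M nu (i # z) = (\<lambda>j. - lam j)"
    using cox_rel_play[OF egcm rel] r1(2) by simp
  have lz: "legalA M A nu (i # z)" using gz by (simp add: gameA_def)
  have "legalA M A (\<lambda>j. - play M nu (i # z) j) (rev (i # z))"
    using conjunct1[OF legalA_rev[of A M, OF d lz]] .
  then have "legalA M A lam (rev z @ [i])" using end1 by simp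
  then have ly: "legalA M A lam (rev z)" by (rule legalA_prefix)
  have "(rev (i # z), rev (rev q)) \<in> cox_rel M n" by (rule cox_rel_rev[OF rel])
  then have "(rev z @ [i], q) \<in> cox_rel M n" by simp
  with ly len show ?thesis by (intro exI[of _ "rev z"]) simp
qed

lemma reach:
  assumes egcm: "egcm M n" and A: "A \<subseteq> {..<n}" and gen: "generic M n lam"
    and lp: "\<forall>k<n. lam k > 0"
  shows "set t \<subseteq> A \<Longrightarrow> \<exists>q. legalA M A lam q \<and> (t, q) \<in> cox_rel M n \<and> length q \<le> length t"
proof (induction t rule: rev_induct)
  case Nil then show ?case by (intro exI[of _ "[]"]) simp
next
  case (snoc i t)
  then obtain q where q: "legalA M A lam q" "(t, q) \<in> cox_rel M n" "length q \<le> length t" by auto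
  have iA: "i \<in> A" using snoc.prems by simp
  have "set q \<subseteq> {..<n}" using legalA_set[OF q(1)] A by auto
  then have nz: "play M lam q i \<noteq> 0" using gen iA A unfolding generic_def by auto
  show ?case
  proof (cases "play M lam q i > 0")
    case True
    then have "legalA M A lam (q @ [i])" using q(1) iA by (simp add: legalA_snoc)
    moreover have "(t @ [i], q @ [i]) \<in> cox_rel M n" using cox_rel_app_right[OF q(2)] .
    ultimately show ?thesis using q(3) by (intro exI[of _ "q@[i]"]) simp
  next
    case False
    then have neg: "play M lam q i < 0" using nz by simp
    have lp': "\<forall>k\<in>A. lam k \<ge> 0" using lp A by (auto simp: less_imp_le)
    obtain y where y: "legalA M A lam y" "(y @ [i], q) \<in> cox_rel M n" "length y + 1 = length q"
      using back_step[OF egcm A lp' q(1) iA neg] by blast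
    have "(t @ [i], q @ [i]) \<in> cox_rel M n" using cox_rel_app_right[OF q(2)] .
    moreover have "(q @ [i], y @ [i] @ [i]) \<in> cox_rel M n"
      using cox_rel_app_right[OF cox_rel_sym[OF y(2)], of "[i]"] by simp
    moreover have "(y @ [i,i], y) \<in> cox_rel M n" using cox_rel_ii'[of i n y M] iA A by auto
    ultimately have "(t @ [i], y) \<in> cox_rel M n" by (auto intro: cox_rel_trans)
    then show ?thesis using y q(3) by (intro exI[of _ y]) simp
  qed
qed

lemma reduced:
  assumes egcm: "egcm M n" and gen: "generic M n lam" and lp: "\<forall>k<n. lam k > 0"
    and l: "legalA M {..<n} lam p"
  shows "cox_length (cls M n p) = length p"
proof -
  obtain t where t: "(p, t) \<in> cox_rel M n" "length t = cox_length (cls M n p)"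
    using ell_witness by blast
  have sp: "set p \<subseteq> {..<n}" using legalA_set[OF l] .
  then have st: "set t \<subseteq> {..<n}" using cox_rel_lists[OF t(1)] by simp
  obtain q where q: "legalA M {..<n} lam q" "(t, q) \<in> cox_rel M n" "length q \<le> length t"
    using reach[OF egcm _ gen lp st] by blast
  have pq: "(p, q) \<in> cox_rel M n" using t(1) q(2) by (rule cox_rel_trans)
  have same: "play M lam p = play M lam q" using cox_rel_play[OF egcm pq] .
  have d: "\<forall>i\<in>{..<n}. M i i = 2" using diagA[OF egcm] by blast
  define nu where "nu = (\<lambda>j. - play M lam p j)"
  have lp': "\<forall>k\<in>{..<n}. lam k \<ge> 0" using lp by (auto simp: less_imp_le)
  have r1: "legalA M {..<n} nu (rev p)" "play M nu (rev p) = (\<lambda>j. - lam j)"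
    using legalA_rev[of "{..<n}" M, OF d l] unfolding nu_def by auto
  have r2: "legalA M {..<n} nu (rev q)" "play M nu (rev q) = (\<lambda>j. - lam j)"
    using legalA_rev[of "{..<n}" M, OF d q(1)] same unfolding nu_def by auto
  have g1: "gameA M {..<n} nu (rev p)" unfolding gameA_def
  proof (intro conjI ballI)
    fix i assume "i \<in> {..<n}" then show "\<not> 0 < play M nu (rev p) i" using r1(2) lp[rule_format, of i] by simp
  qed (rule r1(1))
  have g2: "gameA M {..<n} nu (rev q)" unfolding gameA_def
  proof (intro conjI ballI)
    fix i assume "i \<in> {..<n}" then show "\<not> 0 < play M nu (rev q) i" using r2(2) lp[rule_format, of i] by simp
  qed (rule r2(1))
  have "length (rev q) = length (rev p)" using strong_conv[OF egcm _ g1] g2 by blast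
  then have "length p \<le> cox_length (cls M n p)" using q(3) t(2) by simp
  with ell_le_len[of M n p] show ?thesis by simp
qed



definition small :: "(nat \<Rightarrow> nat \<Rightarrow> real) \<Rightarrow> nat \<Rightarrow> (nat \<Rightarrow> real) \<Rightarrow> (nat \<Rightarrow> real) \<Rightarrow> nat \<Rightarrow> bool" where
  "small M n lam lam' B \<longleftrightarrow> (\<forall>W k. set W \<subseteq> {..<n} \<longrightarrow> length W \<le> B \<longrightarrow> k < n \<longrightarrow>
      play M lam W k \<noteq> 0 \<longrightarrow> \<bar>play M lam' W k - play M lam W k\<bar> < \<bar>play M lam W k\<bar>)"

lemma small_pos: "small M n lam lam' B \<Longrightarrow> set W \<subseteq> {..<n} \<Longrightarrow> length W \<le> B \<Longrightarrow> k < n \<Longrightarrow>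
   play M lam W k > 0 \<Longrightarrow> play M lam' W k > 0"
  unfolding small_def by force

lemma small_neg: "small M n lam lam' B \<Longrightarrow> set W \<subseteq> {..<n} \<Longrightarrow> length W \<le> B \<Longrightarrow> k < n \<Longrightarrow>
   play M lam W k < 0 \<Longrightarrow> play M lam' W k < 0"
  unfolding small_def by force

lemma small_uminus: "small M n lam lam' B \<Longrightarrow> small M n (\<lambda>j. - lam j) (\<lambda>j. - lam' j) B"
  unfolding small_def by (simp add: play_neg abs_minus_commute)

definition ee :: "nat \<Rightarrow> nat \<Rightarrow> real" where "ee l = (\<lambda>m. if m = l then 1 else 0)"

lemma sum_ee: "(\<Sum>l<n. c l * ee l m) = (if m < n then c m else 0)"
proof -
  have "(\<Sum>l<n. c l * ee l m) = (\<Sum>l<n. if m = l then c l else 0)"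
    by (rule sum.cong) (auto simp: ee_def)
  also have "\<dots> = (if m < n then c m else 0)" by (simp add: sum.delta)
  finally show ?thesis .
qed

lemma play_zero_fun: "play M (\<lambda>m. 0) W = (\<lambda>m. 0)"
  using play_smult[of M 0 "\<lambda>m. 0" W] by simp

lemma play_lin: "finite S \<Longrightarrow> play M (\<lambda>m. \<Sum>l\<in>S. c l * f l m) W k = (\<Sum>l\<in>S. c l * play M (f l) W k)"
proof (induction S rule: finite_induct)
  case empty then show ?case by (simp add: play_zero_fun)
next
  case (insert x S)
  have "play M (\<lambda>m. \<Sum>l\<in>insert x S. c l * f l m) W = play M (\<lambda>m. c x * f x m + (\<Sum>l\<in>S. c l * f l m)) W"
    using insert by simp
  also have "\<dots> = (\<lambda>m. play M (\<lambda>m. c x * f x m) W m + play M (\<lambda>m. \<Sum>l\<in>S. c l * f l m) W m)"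
    by (rule play_add)
  finally show ?case using insert by (simp add: play_smult)
qed

lemma play_high: "(\<forall>m<n. h m = 0) \<Longrightarrow> set W \<subseteq> {..<n} \<Longrightarrow> play M h W = h"
  by (induction W) (auto simp: fire_zero)

lemma coef_nonzero:
  assumes egcm: "egcm M n" and W: "set W \<subseteq> {..<n}" and k: "k < n"
  shows "\<exists>l<n. play M (ee l) W k \<noteq> 0"
proof (rule ccontr)
  assume "\<not> ?thesis"
  then have z: "\<And>l. l < n \<Longrightarrow> play M (ee l) W k = 0" by auto
  define nu where "nu = play M (ee k) (rev W)"
  have d: "\<forall>i\<in>set W. M i i = 2" using egcm_diag[OF egcm] W by auto
  have "play M nu W = ee k" unfolding nu_def by (rule play_rev_inv2[of W M, OF d])
  then have one: "play M nu W k = 1" by (simp add: ee_def)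
  define low where "low = (\<lambda>m. \<Sum>l<n. nu l * ee l m)"
  define high where "high = (\<lambda>m. if m < n then 0 else nu m)"
  have "nu = (\<lambda>m. low m + high m)"
    by (rule ext) (auto simp: low_def high_def sum_ee)
  then have "play M nu W k = play M low W k + play M high W k"
    by (simp add: play_add)
  also have "play M high W = high" by (rule play_high) (use W in \<open>auto simp: high_def\<close>)
  also have "play M low W k = (\<Sum>l<n. nu l * play M (ee l) W k)"
    unfolding low_def by (rule play_lin) simp
  also have "\<dots> = 0" using z by simp
  finally show False using one k by (simp add: high_def)
qed

definition eta :: "nat \<Rightarrow> real \<Rightarrow> nat \<Rightarrow> real" where
  "eta n t = (\<lambda>m. \<Sum>l<n. t ^ Suc l * ee l m)"

lemma eta_val: "eta n t m = (if m < n then t ^ Suc m else 0)"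
  unfolding eta_def by (simp add: sum_ee)

lemma play_pert: "play M (\<lambda>m. lam m + eta n t m) W k = play M lam W k + (\<Sum>l<n. t ^ Suc l * play M (ee l) W k)"
  using play_add[of M lam "eta n t" W] play_lin[of "{..<n}" M "\<lambda>l. t ^ Suc l" ee W k]
  unfolding eta_def by simp

definition pF :: "(nat \<Rightarrow> real) \<Rightarrow> nat \<Rightarrow> ((nat \<Rightarrow> real) \<Rightarrow> (nat \<Rightarrow> real)) \<Rightarrow> nat \<Rightarrow> real poly" where
  "pF lam n F k = [:F lam k:] + (\<Sum>l<n. monom (F (ee l) k) (Suc l))"

lemma poly_pF: "poly (pF lam n F k) t = F lam k + (\<Sum>l<n. t ^ Suc l * F (ee l) k)"
  unfolding pF_def by (simp add: poly_sum poly_monom mult.commute)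

lemma coeff_pF: "l < n \<Longrightarrow> coeff (pF lam n F k) (Suc l) = F (ee l) k"
  unfolding pF_def by (simp add: coeff_sum)

lemma exists_good:
  assumes egcm: "egcm M n" and fin: "finite (cox_group M n)" and nn: "\<forall>i<n. lam i \<ge> 0"
  shows "\<exists>lam'. generic M n lam' \<and> (\<forall>i<n. lam' i > 0) \<and> small M n lam lam' B"
proof -
  define FS where "FS = (\<lambda>W. \<lambda>nu. play M nu W) ` {W. set W \<subseteq> {..<n}}"
  define rep where "rep c = (SOME W. W \<in> c)" for c :: "nat list set"
  have FS_sub: "FS \<subseteq> (\<lambda>c. \<lambda>nu. play M nu (rep c)) ` cox_group M n"
  proof
    fix F assume "F \<in> FS"
    then obtain W where W: "set W \<subseteq> {..<n}" "F = (\<lambda>nu. play M nu W)" by (auto simp: FS_def)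
    have "rep (cls M n W) \<in> cls M n W" unfolding rep_def by (rule someI[of _ W]) simp
    then have "(W, rep (cls M n W)) \<in> cox_rel M n" by simp
    then have "F = (\<lambda>nu. play M nu (rep (cls M n W)))" using W(2) cox_rel_play[OF egcm] by auto
    then show "F \<in> (\<lambda>c. \<lambda>nu. play M nu (rep c)) ` cox_group M n" using cls_in_group[OF W(1)] by blast
  qed
  have finFS: "finite FS" using finite_subset[OF FS_sub] fin by auto
  define Bad where "Bad = (\<Union>F\<in>FS. \<Union>k\<in>{..<n}. {t. poly (pF lam n F k) t = 0})"
  have nz: "pF lam n F k \<noteq> 0" if FF: "F \<in> FS" and kk: "k < n" for F k
  proof
    from FF obtain W where W: "set W \<subseteq> {..<n}" "F = (\<lambda>nu. play M nu W)" by (auto simp: FS_def)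
    obtain l where l: "l < n" "play M (ee l) W k \<noteq> 0" using coef_nonzero[OF egcm W(1) kk] by blast
    assume "pF lam n F k = 0"
    then have "coeff (pF lam n F k) (Suc l) = 0" by simp
    then show False using coeff_pF[OF l(1)] l(2) W(2) by simp
  qed
  have finBad: "finite Bad" unfolding Bad_def
    by (intro finite_UN_I finFS) (use nz poly_roots_finite in auto)
  define WS where "WS = {W. set W \<subseteq> {..<n} \<and> length W \<le> B}"
  have finWS: "finite WS" unfolding WS_def by (rule finite_lists_length_le) simp
  define C where "C = 1 + (\<Sum>W\<in>WS. \<Sum>k<n. \<Sum>l<n. \<bar>play M (ee l) W k\<bar>)"
  have Cge: "(\<Sum>l<n. \<bar>play M (ee l) W k\<bar>) \<le> C" if "W \<in> WS" "k < n" for W k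
  proof -
    have "(\<Sum>l<n. \<bar>play M (ee l) W k\<bar>) \<le> (\<Sum>k'<n. \<Sum>l<n. \<bar>play M (ee l) W k'\<bar>)"
      by (rule member_le_sum[of k "{..<n}" "\<lambda>k'. \<Sum>l<n. \<bar>play M (ee l) W k'\<bar>"]) (auto simp: that sum_nonneg)
    also have "\<dots> \<le> (\<Sum>W\<in>WS. \<Sum>k<n. \<Sum>l<n. \<bar>play M (ee l) W k\<bar>)"
      by (rule member_le_sum[OF that(1)]) (auto intro!: sum_nonneg finWS)
    finally show ?thesis unfolding C_def by simp
  qed
  have Cpos: "C > 0" unfolding C_def by (smt (verit) sum_nonneg abs_ge_zero)
  define Vals where "Vals = {\<bar>play M lam W k\<bar> | W k. W \<in> WS \<and> k < n \<and> play M lam W k \<noteq> 0}"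
  have "Vals \<subseteq> (\<lambda>(W,k). \<bar>play M lam W k\<bar>) ` (WS \<times> {..<n})" unfolding Vals_def by auto
  then have finVals: "finite Vals" using finWS finite_subset by blast
  define g where "g = Min (insert 1 Vals)"
  have gpos: "g > 0" unfolding g_def using finVals by (subst Min_gr_iff) (auto simp: Vals_def)
  have gle: "g \<le> v" if "v \<in> Vals" for v unfolding g_def using finVals that by simp
  define dl where "dl = min 1 (g / C)"
  have dlpos: "dl > 0" unfolding dl_def using gpos Cpos by simp
  have "infinite ({0<..<dl} - Bad)" using infinite_Ioo[OF dlpos] finBad by (rule Diff_infinite_finite[rotated])
  then obtain t where t: "t \<in> {0<..<dl}" "t \<notin> Bad" using infinite_imp_nonempty by blast
  have t0: "t > 0" and t1: "t < 1" and tC: "t * C < g"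
    using t(1) Cpos unfolding dl_def by (auto simp: less_divide_eq mult.commute)
  define lam' where "lam' = (\<lambda>m. lam m + eta n t m)"
  have pv: "play M lam' W k = poly (pF lam n (\<lambda>nu. play M nu W) k) t" for W k
    unfolding lam'_def by (simp add: play_pert poly_pF)
  show ?thesis
  proof (intro exI[of _ lam'] conjI)
    show "generic M n lam'" unfolding generic_def
    proof (intro allI impI)
      fix W k assume W: "set W \<subseteq> {..<n}" and k: "k < n"
      have "(\<lambda>nu. play M nu W) \<in> FS" unfolding FS_def using W by blast
      then have "poly (pF lam n (\<lambda>nu. play M nu W) k) t \<noteq> 0" using t(2) k unfolding Bad_def by blast
      then show "play M lam' W k \<noteq> 0" by (simp add: pv)
    qed
    show "\<forall>i<n. lam' i > 0" using nn t0 by (auto simp: lam'_def eta_val add_nonneg_pos)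
    show "small M n lam lam' B" unfolding small_def
    proof (intro allI impI)
      fix W k assume W: "set W \<subseteq> {..<n}" "length W \<le> B" and k: "k < n" and nz: "play M lam W k \<noteq> 0"
      have WS: "W \<in> WS" using W by (simp add: WS_def)
      have "play M lam' W k - play M lam W k = (\<Sum>l<n. t ^ Suc l * play M (ee l) W k)"
        unfolding lam'_def by (simp add: play_pert)
      then have "\<bar>play M lam' W k - play M lam W k\<bar> \<le> (\<Sum>l<n. \<bar>t ^ Suc l * play M (ee l) W k\<bar>)"
        by (simp add: sum_abs)
      also have "\<dots> \<le> (\<Sum>l<n. t * \<bar>play M (ee l) W k\<bar>)"
      proof (rule sum_mono)
        fix l
        have "t ^ Suc l = t * t ^ l" by simp
        also have "\<dots> \<le> t * 1" using t0 t1 by (intro mult_left_mono power_le_one) auto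
        finally have "t ^ Suc l \<le> t" by simp
        then show "\<bar>t ^ Suc l * play M (ee l) W k\<bar> \<le> t * \<bar>play M (ee l) W k\<bar>"
          using t0 by (simp add: abs_mult mult_right_mono)
      qed
      also have "\<dots> = t * (\<Sum>l<n. \<bar>play M (ee l) W k\<bar>)" by (simp add: sum_distrib_left)
      also have "\<dots> \<le> t * C" using Cge[OF WS k] t0 by (intro mult_left_mono) auto
      also have "\<dots> < g" by (rule tC)
      also have "g \<le> \<bar>play M lam W k\<bar>" using gle WS k nz unfolding Vals_def by blast
      finally show "\<bar>play M lam' W k - play M lam W k\<bar> < \<bar>play M lam W k\<bar>" .
    qed
  qed
qed



lemma legal_play_eq: "legal_play M n pos s = legalA M {..<n} pos s"
  by (induction s arbitrary: pos) auto

lemma game_sequence_eq: "game_sequence M n pos s = gameA M {..<n} pos s"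
  unfolding game_sequence_def gameA_def terminal_def legal_play_eq by auto

lemma transfer:
  assumes sm: "small M n a a' B0" and x: "set x \<subseteq> {..<n}" and A: "A \<subseteq> {..<n}"
  shows "legalA M A (play M a x) w \<Longrightarrow> length x + length w \<le> B0 \<Longrightarrow> legalA M A (play M a' x) w"
proof (induction w rule: rev_induct)
  case Nil then show ?case by simp
next
  case (snoc i w)
  then have l: "legalA M A (play M a x) w" and i: "i \<in> A" and p: "play M a (x @ w) i > 0"
    by (auto simp: legalA_snoc)
  have lw: "legalA M A (play M a' x) w" using snoc.IH l snoc.prems(2) by simp
  have "set (x @ w) \<subseteq> {..<n}" using x legalA_set[OF l] A by auto
  then have "play M a' (x @ w) i > 0"
    using small_pos[OF sm _ _ _ p] snoc.prems(2) i A by auto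
  then show ?case using lw i by (simp add: legalA_snoc)
qed

locale mainctx =
  fixes M n J lam w0 w0J
  assumes egcm: "egcm M n" and fin: "finite (cox_group M n)"
    and lw0: "longest_element (cox_group M n) w0" and Jn: "J \<subseteq> {..<n}"
    and lw0J: "longest_element (parabolic M n J) w0J" and inC: "in_C n J lam"
begin

definition N where "N = cox_length w0"
definition NJ where "NJ = cox_length w0J"

lemma lam_nn: "\<forall>i<n. lam i \<ge> 0"
  using inC Jn unfolding in_C_def by (metis less_imp_le order_refl subset_iff lessThan_iff)

lemma lamJ: "j \<in> J \<Longrightarrow> lam j = 0" using inC unfolding in_C_def by blast
lemma lam_pos: "i < n \<Longrightarrow> i \<notin> J \<Longrightarrow> lam i > 0" using inC unfolding in_C_def by blast

lemma fixJ: "set x \<subseteq> J \<Longrightarrow> play M lam x = lam"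
  by (induction x) (auto simp: fire_zero lamJ)

lemma ell_le_N: "set w \<subseteq> {..<n} \<Longrightarrow> cox_length (cls M n w) \<le> N"
  using lw0 cls_in_group[of w n M] unfolding longest_element_def N_def by blast

lemma ell_le_NJ: "set x \<subseteq> J \<Longrightarrow> cox_length (cls M n x) \<le> NJ"
proof -
  assume x: "set x \<subseteq> J"
  then have "cls M n x \<in> parabolic M n J" unfolding parabolic_def
    using cls_in_group[of x n M] Jn by auto
  then show ?thesis using lw0J unfolding longest_element_def NJ_def by blast
qed

lemma NJ_le_N: "NJ \<le> N"
  using lw0J lw0 unfolding longest_element_def parabolic_def NJ_def N_def by blast

lemma r0_ex: "\<exists>r0. set r0 \<subseteq> {..<n} \<and> w0 = cls M n r0 \<and> length r0 = N"
proof -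
  have "w0 \<in> cox_group M n" using lw0 by (simp add: longest_element_def)
  then obtain w where w: "set w \<subseteq> {..<n}" "w0 = cls M n w" using group_cls by blast
  obtain t where t: "(w, t) \<in> cox_rel M n" "length t = cox_length (cls M n w)"
    using ell_witness by blast
  have "cls M n t = cls M n w" using cls_eq[OF t(1)] by simp
  moreover have "set t \<subseteq> {..<n}" using cox_rel_lists[OF t(1)] w(1) by simp
  ultimately show ?thesis using w t(2) unfolding N_def by (intro exI[of _ t]) simp
qed

lemma rJ_ex: "\<exists>rJ. set rJ \<subseteq> J \<and> w0J = cls M n rJ"
proof -
  have "w0J \<in> parabolic M n J" using lw0J by (simp add: longest_element_def)
  then obtain w v where w: "set w \<subseteq> {..<n}" "w0J = cls M n w" and v: "v \<in> w0J" "set v \<subseteq> J"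
    unfolding parabolic_def using group_cls by blast
  have "(w, v) \<in> cox_rel M n" using v(1) w(2) by simp
  then have "cls M n w = cls M n v" by (rule cls_eq)
  then show ?thesis using w v by auto
qed

end

locale goodctx = mainctx +
  fixes lam'
  assumes gen: "generic M n lam'" and lpos: "\<forall>i<n. lam' i > 0"
    and sm: "small M n lam lam' (4 * N + 4)"
begin

lemma bound: "legalA M {..<n} lam p \<Longrightarrow> length p \<le> N"
proof (rule ccontr)
  assume l: "legalA M {..<n} lam p" and "\<not> length p \<le> N"
  define p0 where "p0 = take (Suc N) p"
  have lp0: "legalA M {..<n} lam p0"
    using l legalA_prefix[of M "{..<n}" lam p0 "drop (Suc N) p"] unfolding p0_def by simp
  have len: "length p0 = Suc N" using \<open>\<not> length p \<le> N\<close> unfolding p0_def by simp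
  have "legalA M {..<n} (play M lam' []) p0"
    by (rule transfer[OF sm, of "[]"]) (use lp0 len in auto)
  then have "legalA M {..<n} lam' p0" by simp
  then have "cox_length (cls M n p0) = Suc N" using reduced[OF egcm gen lpos] len by simp
  moreover have "cox_length (cls M n p0) \<le> N" using ell_le_N legalA_set[OF lp0] by simp
  ultimately show False by simp
qed

lemma upper: "gameA M {..<n} lam s \<Longrightarrow> length s + NJ \<le> N"
proof -
  assume g: "gameA M {..<n} lam s"
  then have ls: "legalA M {..<n} lam s" by (simp add: gameA_def)
  obtain rJ where rJ: "set rJ \<subseteq> J" "w0J = cls M n rJ" using rJ_ex by blast
  obtain x where x: "legalA M J lam' x" "(rJ, x) \<in> cox_rel M n"
    using reach[OF egcm Jn gen lpos rJ(1)] by blast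
  have xJ: "set x \<subseteq> J" using legalA_set[OF x(1)] .
  have lx: "legalA M {..<n} lam' x" using legalA_mono[OF x(1) Jn] .
  have "cox_length (cls M n x) = NJ" using cls_eq[OF x(2)] rJ(2) unfolding NJ_def by simp
  then have xlen: "length x = NJ" using reduced[OF egcm gen lpos lx] by simp
  have slen: "length s \<le> N" using bound[OF ls] .
  have "legalA M {..<n} (play M lam x) s" using ls fixJ[OF xJ] by simp
  then have "legalA M {..<n} (play M lam' x) s"
    using transfer[OF sm _ order_refl] xJ Jn xlen slen NJ_le_N by auto
  then have "legalA M {..<n} lam' (x @ s)" using lx by (simp add: legalA_append)
  then have "cox_length (cls M n (x @ s)) = length x + length s" using reduced[OF egcm gen lpos] by simp
  moreover have "cox_length (cls M n (x @ s)) \<le> N"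
    using ell_le_N legalA_set[OF lx] legalA_set[OF ls] by simp
  ultimately show ?thesis using xlen by simp
qed

end



context goodctx
begin

lemma diagn: "\<forall>i\<in>{..<n}. M i i = 2" using diagA[OF egcm] by blast

lemma lam'_nn: "\<forall>k\<in>{..<n}. lam' k \<ge> 0" using lpos by (auto simp: less_imp_le)

lemma decomp:
  "set r \<subseteq> {..<n} \<Longrightarrow> length r \<le> N \<Longrightarrow> \<exists>x p. (r, x @ p) \<in> cox_rel M n \<and> legalA M J lam' x \<and>
      legalA M {..<n} lam p \<and> length x + length p \<le> length r"
proof (induction "length r" arbitrary: r rule: less_induct)
  case less
  show ?case
  proof (cases r rule: rev_exhaust)
    case Nil then show ?thesis by (intro exI[of _ "[]"]) simp
  next
    case (snoc r' i)
    have r'n: "set r' \<subseteq> {..<n}" and i: "i < n" using less.prems snoc by auto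
    obtain x p where xp: "(r', x @ p) \<in> cox_rel M n" "legalA M J lam' x" "legalA M {..<n} lam p"
       "length x + length p \<le> length r'"
      using less.hyps[of r'] r'n less.prems snoc by auto
    have lenr: "length r = Suc (length r')" using snoc by simp
    have xJ: "set x \<subseteq> J" using legalA_set[OF xp(2)] .
    have xn: "set x \<subseteq> {..<n}" using xJ Jn by auto
    have pn: "set p \<subseteq> {..<n}" using legalA_set[OF xp(3)] .
    have xpN: "length x + length p \<le> N" using xp(4) lenr less.prems(2) by simp
    have lx: "legalA M {..<n} lam' x" using legalA_mono[OF xp(2) Jn] .
    have "legalA M {..<n} (play M lam x) p" using xp(3) fixJ[OF xJ] by simp
    then have "legalA M {..<n} (play M lam' x) p"
      using transfer[OF sm xn order_refl] xpN by simp
    then have lxp: "legalA M {..<n} lam' (x @ p)" using lx by (simp add: legalA_append)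
    define mu where "mu = play M lam p"
    define mu' where "mu' = play M lam' (x @ p)"
    have hmu: "play M lam (x @ p) = mu" unfolding mu_def using fixJ[OF xJ] by simp
    have "set (x @ p) \<subseteq> {..<n}" using xn pn by simp
    then have nz: "mu' i \<noteq> 0" using gen i unfolding generic_def mu'_def by blast
    have rel1: "(r, x @ p @ [i]) \<in> cox_rel M n" using cox_rel_app_right[OF xp(1), of "[i]"] snoc by simp
    show ?thesis
    proof (cases "mu' i < 0")
      case True
      obtain y where y: "legalA M {..<n} lam' y" "(y @ [i], x @ p) \<in> cox_rel M n"
          "length y + 1 = length (x @ p)"
        using back_step[OF egcm order_refl lam'_nn lxp _ True[unfolded mu'_def]] i by auto
      have yn: "set y \<subseteq> {..<n}" using legalA_set[OF y(1)] .
      have ylt: "length y < length r" using y(3) xp(4) lenr by simp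
      obtain x2 p2 where xp2: "(y, x2 @ p2) \<in> cox_rel M n" "legalA M J lam' x2" "legalA M {..<n} lam p2"
         "length x2 + length p2 \<le> length y"
        using less.hyps[OF ylt yn] ylt less.prems(2) by auto
      have "(x @ p @ [i], y @ [i] @ [i]) \<in> cox_rel M n"
        using cox_rel_app_right[OF cox_rel_sym[OF y(2)], of "[i]"] by simp
      moreover have "(y @ [i] @ [i], y) \<in> cox_rel M n" using cox_rel_ii'[of i n y M] i by simp
      ultimately have "(r, x2 @ p2) \<in> cox_rel M n" using rel1 xp2(1) by (blast intro: cox_rel_trans)
      then show ?thesis using xp2 ylt by (intro exI[of _ x2] exI[of _ p2]) simp
    next
      case False
      then have mpos: "mu' i > 0" using nz by simp
      consider (a) "mu i > 0" | (b) "mu i < 0" | (c) "mu i = 0" by linarith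
      then show ?thesis
      proof cases
        case a
        then have "legalA M {..<n} lam (p @ [i])" using xp(3) i by (simp add: legalA_snoc mu_def)
        then show ?thesis using rel1 xp(2) xp(4) lenr by (intro exI[of _ x] exI[of _ "p @ [i]"]) simp
      next
        case b
        have "play M lam' (x @ p) i < 0"
          using small_neg[OF sm _ _ i, of "x @ p"] xn pn xpN b hmu by simp
        then show ?thesis using mpos unfolding mu'_def by simp
      next
        case c
        have Mii: "M i i = 2" using egcm_diag[OF egcm i] .
        define X where "X = x @ p @ [i]"
        define nu where "nu = (\<lambda>j. - play M lam' X j)"
        define G where "G = i # rev (x @ p)"
        have Xn: "set X \<subseteq> {..<n}" using xn pn i unfolding X_def by auto
        have hmu2: "play M lam X = mu" unfolding X_def using hmu c by (simp add: fire_zero)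
        have nuX: "nu = play M (\<lambda>j. - lam' j) X" unfolding nu_def by (simp add: play_neg)
        have pX: "play M lam' X = fire M i mu'" unfolding X_def mu'_def by simp
        have fi: "fire M i nu = (\<lambda>j. - mu' j)"
          unfolding nu_def pX using Mii by (simp add: fire_neg fire_fire)
        have nui: "nu i > 0" unfolding nu_def pX using Mii mpos by (simp add: fire_def)
        have r1: "legalA M {..<n} (\<lambda>j. - mu' j) (rev (x @ p))" "play M (\<lambda>j. - mu' j) (rev (x @ p)) = (\<lambda>j. - lam' j)"
          using legalA_rev[of "{..<n}" M, OF diagn lxp] unfolding mu'_def by auto
        have gG: "gameA M {..<n} nu G" unfolding gameA_def G_def
        proof (intro conjI ballI)
          show "legalA M {..<n} nu (i # rev (x @ p))" using i nui fi r1(1) by simp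
          fix k assume "k \<in> {..<n}"
          then show "\<not> 0 < play M nu (i # rev (x @ p)) k" using fi r1(2) lpos[rule_format, of k] by simp
        qed
        have sm2: "small M n (\<lambda>j. - lam j) (\<lambda>j. - lam' j) (4 * N + 4)" using small_uminus[OF sm] .
        have "legalA M {..<n} (\<lambda>j. - play M lam p j) (rev p)"
          using legalA_rev[of "{..<n}" M, OF diagn xp(3)] by simp
        then have "legalA M {..<n} (play M (\<lambda>j. - lam j) X) (rev p)"
          using hmu2 unfolding mu_def by (simp add: play_neg)
        then have lrp: "legalA M {..<n} nu (rev p)"
          unfolding nuX using transfer[OF sm2 Xn order_refl] xpN unfolding X_def by simp
        note SC = strong_conv[OF egcm order_refl gG]
        obtain z where gz: "gameA M {..<n} nu (rev p @ z)"
          using extend_game[OF conjunct1[OF SC] lrp] by blast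
        have lz: "length (rev p @ z) = length G" and relz: "(rev p @ z, G) \<in> cox_rel M n"
          using SC gz by blast+
        have zlen: "length z = length x + 1" using lz unfolding G_def by simp
        have lzz: "legalA M {..<n} (play M nu (rev p)) z" using gz by (simp add: gameA_def legalA_append)
        have hback: "play M mu (rev p) = lam" unfolding mu_def
          using play_rev_inv[of p M lam] diagn pn by auto
        have zJ_gen: "legalA M {..<n} (play M nu (rev p)) z' \<Longrightarrow> length z' \<le> length x + 1 \<Longrightarrow> set z' \<subseteq> J" for z'
        proof (induction z' rule: rev_induct)
          case Nil then show ?case by simp
        next
          case (snoc k z')
          then have lz': "legalA M {..<n} (play M nu (rev p)) z'" and kn: "k < n"
            and kp: "play M nu (rev p @ z') k > 0" by (auto simp: legalA_snoc)
          have z'J: "set z' \<subseteq> J" using snoc.IH lz' snoc.prems(2) by simp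
          define W where "W = X @ rev p @ z'"
          have Wn: "set W \<subseteq> {..<n}" using Xn pn z'J Jn unfolding W_def by auto
          have Wlen: "length W \<le> 4 * N + 4" using snoc.prems(2) xpN unfolding W_def X_def by simp
          have e1: "play M nu (rev p @ z') = play M (\<lambda>j. - lam' j) W" unfolding W_def nuX by simp
          have e2: "play M (\<lambda>j. - lam j) W = (\<lambda>j. - lam j)"
            unfolding W_def by (simp add: play_neg hmu2 hback fixJ[OF z'J])
          show ?case
          proof (rule ccontr)
            assume "\<not> set (z' @ [k]) \<subseteq> J"
            then have "k \<notin> J" using z'J by auto
            then have "play M (\<lambda>j. - lam j) W k < 0" using e2 lam_pos[OF kn] by simp
            then have "play M (\<lambda>j. - lam' j) W k < 0" using small_neg[OF sm2 Wn Wlen kn] by simp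
            then show False using kp e1 by simp
          qed
        qed
        have zJ: "set z \<subseteq> J" using zJ_gen[OF lzz] zlen by simp
        have endz: "play M nu (rev p @ z) = (\<lambda>j. - lam' j)"
          using cox_rel_play[OF egcm relz] fi r1(2) unfolding G_def by simp
        have lgz: "legalA M {..<n} nu (rev p @ z)" using gz by (simp add: gameA_def)
        have "legalA M {..<n} (\<lambda>j. - play M nu (rev p @ z) j) (rev (rev p @ z))"
          using conjunct1[OF legalA_rev[of "{..<n}" M, OF diagn lgz]] .
        then have "legalA M {..<n} lam' (rev z @ p)" using endz by simp
        then have "legalA M {..<n} lam' (rev z)" by (rule legalA_prefix)
        then have lzJ: "legalA M J lam' (rev z)" by (rule legalA_restrict) (use zJ in auto)
        have "(rev (rev p @ z), rev G) \<in> cox_rel M n" by (rule cox_rel_rev[OF relz])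
        then have "(rev z @ p, x @ p @ [i]) \<in> cox_rel M n" unfolding G_def by simp
        then have "(r, rev z @ p) \<in> cox_rel M n" using cox_rel_trans[OF rel1 cox_rel_sym] by blast
        then show ?thesis using lzJ xp(3) zlen xp(4) lenr
          by (intro exI[of _ "rev z"] exI[of _ p]) simp
      qed
    qed
  qed
qed

lemma lower: "gameA M {..<n} lam s \<Longrightarrow> N \<le> NJ + length s"
proof -
  assume g: "gameA M {..<n} lam s"
  obtain r0 where r0: "set r0 \<subseteq> {..<n}" "w0 = cls M n r0" "length r0 = N" using r0_ex by blast
  obtain x p where xp: "(r0, x @ p) \<in> cox_rel M n" "legalA M J lam' x" "legalA M {..<n} lam p"
    "length x + length p \<le> length r0"
    using decomp[OF r0(1)] r0(3) by auto
  have "N = cox_length (cls M n (x @ p))" using cls_eq[OF xp(1)] r0(2) unfolding N_def by simp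
  also have "\<dots> \<le> length x + length p" using ell_le_len[of M n "x @ p"] by simp
  finally have 1: "N \<le> length x + length p" .
  have xJ: "set x \<subseteq> J" using legalA_set[OF xp(2)] .
  have "length x = cox_length (cls M n x)"
    using reduced[OF egcm gen lpos legalA_mono[OF xp(2) Jn]] by simp
  also have "\<dots> \<le> NJ" using ell_le_NJ[OF xJ] .
  finally have 2: "length x \<le> NJ" .
  have 3: "length p \<le> length s" using strong_conv[OF egcm order_refl g] xp(3) by blast
  show ?thesis using 1 2 3 by simp
qed

lemma result:
  "(\<forall>s. game_sequence M n lam s \<longrightarrow> length s = N - NJ) \<and> \<not> (\<exists>f. infinite_game M n lam f)"
proof (intro conjI allI impI notI)
  fix s assume "game_sequence M n lam s"
  then have g: "gameA M {..<n} lam s" by (simp add: game_sequence_eq)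
  show "length s = N - NJ" using upper[OF g] lower[OF g] by simp
next
  assume "\<exists>f. infinite_game M n lam f"
  then obtain f where f: "infinite_game M n lam f" by blast
  then have "legalA M {..<n} lam (map f [0..<Suc N])"
    unfolding infinite_game_def legal_play_eq by blast
  then have "length (map f [0..<Suc N]) \<le> N" by (rule bound)
  then show False by simp
qed

end

lemma (in mainctx) final:
  "(\<forall>s. game_sequence M n lam s \<longrightarrow> length s = cox_length w0 - cox_length w0J) \<and>
     \<not> (\<exists>f. infinite_game M n lam f)"
proof -
  obtain lam' where l': "generic M n lam'" "\<forall>i<n. lam' i > 0" "small M n lam lam' (4 * N + 4)"
    using exists_good[OF egcm fin lam_nn] by blast
  interpret goodctx M n J lam w0 w0J lam'
    by (unfold_locales) (rule l')+
  show ?thesis using result unfolding N_def NJ_def by simp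
qed

theorem proposition5p3:
  fixes M :: "nat \<Rightarrow> nat \<Rightarrow> real" and n :: nat and J :: "nat set"
    and w0 w0J :: "nat list set" and pos :: "nat \<Rightarrow> real"
  assumes "egcm M n"
    and "finite (cox_group M n)"
    and "longest_element (cox_group M n) w0"
    and "J \<subseteq> {..<n}"
    and "longest_element (parabolic M n J) w0J"
    and "in_C n J pos"
  shows "(\<forall>s. game_sequence M n pos s \<longrightarrow> length s = cox_length w0 - cox_length w0J)
       \<and> \<not> (\<exists>f. infinite_game M n pos f)"
proof -
  interpret mainctx M n J pos w0 w0J using assms by unfold_locales
  show ?thesis by (rule final)
qed

end
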